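(* For every prime $p\geq 2$, $SD(\mathbb{Q}_p)=\{\mathrm{id}\}$.
   Context: $\mathbb{Q}_p$ denotes the field of $p$-adic numbers. For fields $\mathbb{F},\widetilde{\mathbb{F}}$, a map $f:\mathbb{F}\to\widetilde{\mathbb{F}}$ is called an SD-map if for all $x\neq y$ in $\mathbb{F}$ one has $f(x)\neq f(y)$ and \[ f\left(\frac{x+y}{x-y}\right)=\frac{f(x)+f(y)}{f(x)-f(y)}. \] For a field $\mathbb{F}$, $SD(\mathbb{F})$ denotes the set of surjective SD-maps $f:\mathbb{F}\to\mathbb{F}$ (no continuity is assumed). *)

theory Defs
  imports Complex_Main "HOL-Computational_Algebra.Primes"
begin

text \<open>The field of p-adic numbers, constructed as the completion of the rationals
with respect to the p-adic absolute value: equivalence classes of p-adic Cauchy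
sequences of rationals modulo p-adic null sequences.\<close>

definition padic_abs :: "nat \<Rightarrow> rat \<Rightarrow> real" where
  "padic_abs p q =
     (if q = 0 then 0
      else (let (a, b) = quotient_of q in
            real p powr (- (real (multiplicity (int p) a) - real (multiplicity (int p) b)))))"

definition padic_cauchy :: "nat \<Rightarrow> (nat \<Rightarrow> rat) \<Rightarrow> bool" where
  "padic_cauchy p X \<longleftrightarrow>
     (\<forall>e>0. \<exists>N. \<forall>m\<ge>N. \<forall>n\<ge>N. padic_abs p (X m - X n) < e)"

definition padic_equiv :: "nat \<Rightarrow> (nat \<Rightarrow> rat) \<Rightarrow> (nat \<Rightarrow> rat) \<Rightarrow> bool" where
  "padic_equiv p X Y \<longleftrightarrow> (\<lambda>n. padic_abs p (X n - Y n)) \<longlonglongrightarrow> 0"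

definition padic_class :: "nat \<Rightarrow> (nat \<Rightarrow> rat) \<Rightarrow> (nat \<Rightarrow> rat) set" where
  "padic_class p X = {Y. padic_cauchy p Y \<and> padic_equiv p X Y}"

definition padic :: "nat \<Rightarrow> (nat \<Rightarrow> rat) set set" where
  "padic p = {padic_class p X | X. padic_cauchy p X}"

definition padic_rep :: "(nat \<Rightarrow> rat) set \<Rightarrow> nat \<Rightarrow> rat" where
  "padic_rep x = (SOME X. X \<in> x)"

definition padic_zero :: "nat \<Rightarrow> (nat \<Rightarrow> rat) set" where
  "padic_zero p = padic_class p (\<lambda>n. 0)"

definition padic_add :: "nat \<Rightarrow> (nat \<Rightarrow> rat) set \<Rightarrow> (nat \<Rightarrow> rat) set \<Rightarrow> (nat \<Rightarrow> rat) set" where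
  "padic_add p x y = padic_class p (\<lambda>n. padic_rep x n + padic_rep y n)"

definition padic_sub :: "nat \<Rightarrow> (nat \<Rightarrow> rat) set \<Rightarrow> (nat \<Rightarrow> rat) set \<Rightarrow> (nat \<Rightarrow> rat) set" where
  "padic_sub p x y = padic_class p (\<lambda>n. padic_rep x n - padic_rep y n)"

definition padic_mult :: "nat \<Rightarrow> (nat \<Rightarrow> rat) set \<Rightarrow> (nat \<Rightarrow> rat) set \<Rightarrow> (nat \<Rightarrow> rat) set" where
  "padic_mult p x y = padic_class p (\<lambda>n. padic_rep x n * padic_rep y n)"

text \<open>Inverse (a nonzero class has a representative that is eventually nonzero;
the finitely many zero terms are replaced by 0, which does not change the class).\<close>
definition padic_inverse :: "nat \<Rightarrow> (nat \<Rightarrow> rat) set \<Rightarrow> (nat \<Rightarrow> rat) set" where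
  "padic_inverse p x =
     (if x = padic_zero p then padic_zero p
      else padic_class p (\<lambda>n. inverse (padic_rep x n)))"

definition padic_divide :: "nat \<Rightarrow> (nat \<Rightarrow> rat) set \<Rightarrow> (nat \<Rightarrow> rat) set \<Rightarrow> (nat \<Rightarrow> rat) set" where
  "padic_divide p x y = padic_mult p x (padic_inverse p y)"

definition padic_SD_map :: "nat \<Rightarrow> ((nat \<Rightarrow> rat) set \<Rightarrow> (nat \<Rightarrow> rat) set) \<Rightarrow> bool" where
  "padic_SD_map p f \<longleftrightarrow>
     (\<forall>x\<in>padic p. f x \<in> padic p) \<and>
     (\<forall>x\<in>padic p. \<forall>y\<in>padic p. x \<noteq> y \<longrightarrow>
        f x \<noteq> f y \<and>
        f (padic_divide p (padic_add p x y) (padic_sub p x y)) =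
          padic_divide p (padic_add p (f x) (f y)) (padic_sub p (f x) (f y)))"

definition padic_SD :: "nat \<Rightarrow> ((nat \<Rightarrow> rat) set \<Rightarrow> (nat \<Rightarrow> rat) set) set" where
  "padic_SD p = {f. padic_SD_map p f \<and> f ` padic p = padic p}"

end

theory Submission
  imports Defs "HOL-Algebra.Ring"
begin

definition vq :: "nat \<Rightarrow> rat \<Rightarrow> int" where
  "vq p q = (let (a, b) = quotient_of q in int (multiplicity (int p) a) - int (multiplicity (int p) b))"

definition vge :: "nat \<Rightarrow> rat \<Rightarrow> int \<Rightarrow> bool" where
  "vge p q k \<longleftrightarrow> q = 0 \<or> k \<le> vq p q"

locale pctx =
  fixes p :: nat
  assumes prime_p: "prime p"
begin

lemma pe: "prime_elem (int p)" using prime_p by simp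
lemma pnu: "\<not> is_unit (int p)" using pe prime_elem_def by blast

lemma mult_distrib: "a \<noteq> 0 \<Longrightarrow> b \<noteq> 0 \<Longrightarrow>
  multiplicity (int p) (a * b) = multiplicity (int p) a + multiplicity (int p) b"
  using prime_elem_multiplicity_mult_distrib[OF pe] by blast

lemma vq_frac:
  fixes a b :: int
  assumes "a \<noteq> 0" "b \<noteq> 0"
  shows "vq p (of_int a / of_int b) = int (multiplicity (int p) a) - int (multiplicity (int p) b)"
proof -
  obtain a' b' where q: "quotient_of (of_int a / of_int b) = (a', b')" by (cases "quotient_of (of_int a / of_int b)")
  have b'0: "b' > 0" using quotient_of_denom_pos[OF q] .
  have eq: "(of_int a / of_int b :: rat) = of_int a' / of_int b'" using quotient_of_div[OF q] .
  then have "of_int a * of_int b' = (of_int a' * of_int b :: rat)" using assms b'0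
    by (simp add: field_simps)
  then have e2: "a * b' = a' * b" by (metis of_int_eq_iff of_int_mult)
  have a'0: "a' \<noteq> 0" using e2 assms b'0 by auto
  have "multiplicity (int p) a + multiplicity (int p) b' = multiplicity (int p) a' + multiplicity (int p) b"
    using e2 mult_distrib assms a'0 b'0 by (metis less_irrefl)
  then show ?thesis unfolding vq_def q by simp
qed

lemma rat_frac: fixes q :: rat obtains a b :: int where "q = of_int a / of_int b" "b \<noteq> 0" "q \<noteq> 0 \<Longrightarrow> a \<noteq> 0"
proof -
  obtain a b where q: "quotient_of q = (a, b)" by (cases "quotient_of q")
  show ?thesis using that[of a b] quotient_of_div[OF q] quotient_of_denom_pos[OF q] by auto
qed

lemma vq_mult: assumes "x \<noteq> 0" "y \<noteq> 0" shows "vq p (x * y) = vq p x + vq p y"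
proof -
  obtain a b where x: "x = of_int a / of_int b" "b \<noteq> 0" "a \<noteq> 0" using rat_frac[of x] assms by metis
  obtain c d where y: "y = of_int c / of_int d" "d \<noteq> 0" "c \<noteq> 0" using rat_frac[of y] assms by metis
  have "x * y = of_int (a * c) / of_int (b * d)" using x y by simp
  then have "vq p (x * y) = int (multiplicity (int p) (a * c)) - int (multiplicity (int p) (b * d))"
    using x y vq_frac[of "a * c" "b * d"] by simp
  then show ?thesis using x y vq_frac mult_distrib by simp
qed

lemma vq_one: "vq p 1 = 0" using vq_frac[of 1 1] by simp

lemma vq_inverse: assumes "x \<noteq> 0" shows "vq p (inverse x) = - vq p x"
  using vq_mult[of x "inverse x"] assms vq_one by simp

lemma vq_divide: assumes "x \<noteq> 0" "y \<noteq> 0" shows "vq p (x / y) = vq p x - vq p y"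
  using vq_mult[of x "inverse y"] vq_inverse[of y] assms by (simp add: divide_inverse)

lemma vq_minus: "vq p (- x) = vq p x"
proof (cases "x = 0")
  case False
  have "multiplicity (int p) (-1) = 0" using multiplicity_unit_right[of "-1::int"] by simp
  then have "vq p (-1) = 0" using vq_frac[of "-1" 1] by simp
  then show ?thesis using vq_mult[of "-1" x] False by simp
qed simp

lemma vq_int: "a \<noteq> 0 \<Longrightarrow> vq p (of_int a) = int (multiplicity (int p) a)"
  using vq_frac[of a 1] by simp

lemma vq_int_nonneg: "vq p (of_int a) \<ge> 0"
  by (cases "a = 0") (simp_all add: vq_int vq_def)

lemma vq_nat_nonneg: "vq p (of_nat a) \<ge> 0"
  using vq_int_nonneg[of "int a"] by simp

lemma vq_p: "vq p (of_nat p) = 1"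
proof -
  have "vq p (of_int (int p)) = 1"
    using vq_int[of "int p"] prime_p multiplicity_self[of "int p"] pnu prime_gt_0_nat by fastforce
  then show ?thesis by simp
qed

lemma vq_add: assumes "x \<noteq> 0" "y \<noteq> 0" "x + y \<noteq> 0" shows "vq p (x + y) \<ge> min (vq p x) (vq p y)"
proof -
  obtain a b where x: "x = of_int a / of_int b" "b \<noteq> 0" "a \<noteq> 0" using rat_frac[of x] assms by metis
  obtain c d where y: "y = of_int c / of_int d" "d \<noteq> 0" "c \<noteq> 0" using rat_frac[of y] assms by metis
  have s: "x + y = of_int (a * d + c * b) / of_int (b * d)" using x y by (simp add: field_simps)
  have n0: "a * d + c * b \<noteq> 0"
  proof
    assume "a * d + c * b = 0"
    then have "(of_int (a * d + c * b) :: rat) = 0" by simp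
    then show False using s assms by simp
  qed
  define m where "m = min (multiplicity (int p) (a * d)) (multiplicity (int p) (c * b))"
  have "int p ^ m dvd a * d" "int p ^ m dvd c * b" unfolding m_def by (auto intro: multiplicity_dvd')
  then have "int p ^ m dvd a * d + c * b" by simp
  then have "m \<le> multiplicity (int p) (a * d + c * b)" using multiplicity_geI[OF n0 pnu] by blast
  moreover have "vq p (x + y) = int (multiplicity (int p) (a * d + c * b)) - int (multiplicity (int p) (b * d))"
    using s vq_frac[OF n0, of "b * d"] x y by simp
  ultimately have "vq p (x + y) \<ge> int m - int (multiplicity (int p) (b * d))"
    by linarith
  moreover have "vq p x = int (multiplicity (int p) (a * d)) - int (multiplicity (int p) (b * d))"
    using x y vq_frac mult_distrib by simp
  moreover have "vq p y = int (multiplicity (int p) (c * b)) - int (multiplicity (int p) (b * d))"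
    using x y vq_frac mult_distrib by simp
  ultimately show ?thesis unfolding m_def by linarith
qed

lemma vq_add_strict: assumes "x \<noteq> 0" "y \<noteq> 0" "vq p x < vq p y" shows "x + y \<noteq> 0" "vq p (x + y) = vq p x"
proof -
  show xy: "x + y \<noteq> 0" proof
    assume "x + y = 0" then have "y = - x" by (simp add: eq_neg_iff_add_eq_0)
    then show False using assms vq_minus by simp
  qed
  have "vq p (x + y) \<ge> vq p x" using vq_add[OF assms(1,2) xy] assms by simp
  moreover have "vq p x \<ge> min (vq p (x + y)) (vq p y)"
    using vq_add[of "x + y" "- y"] xy assms vq_minus by simp
  ultimately show "vq p (x + y) = vq p x" using assms by linarith
qed

lemma vq_two: "vq p 2 = (if p = 2 then 1 else 0)"
proof -
  have "vq p (of_int 2) = int (multiplicity (int p) 2)" using vq_int[of 2] by simp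
  moreover have "multiplicity (int p) 2 = (if p = 2 then 1 else 0)"
  proof (cases "p = 2")
    case True then show ?thesis using multiplicity_self[of "2::int"] by simp
  next
    case False
    have "\<not> int p dvd 2"
    proof
      assume "int p dvd 2" then have "p dvd 2" by presburger
      then have "p \<le> 2" by (simp add: dvd_imp_le)
      then show False using False prime_p prime_ge_2_nat[OF prime_p] by simp
    qed
    then show ?thesis using False multiplicity_eq_zero_iff[of "2::int" "int p"] pnu by simp
  qed
  ultimately show ?thesis by simp
qed

lemma vge_zero[simp]: "vge p 0 k" by (simp add: vge_def)
lemma vge_mono: "vge p x k \<Longrightarrow> j \<le> k \<Longrightarrow> vge p x j" by (auto simp: vge_def)
lemma vge_minus: "vge p (- x) k = vge p x k" by (simp add: vge_def vq_minus)
lemma vge_add: "vge p x k \<Longrightarrow> vge p y k \<Longrightarrow> vge p (x + y) k"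
  using vq_add[of x y] unfolding vge_def by (cases "x = 0"; cases "y = 0"; cases "x + y = 0"; auto)
lemma vge_diff: "vge p x k \<Longrightarrow> vge p y k \<Longrightarrow> vge p (x - y) k"
  using vge_add[of x k "- y"] vge_minus by simp
lemma vge_mult: "vge p x k \<Longrightarrow> vge p y j \<Longrightarrow> vge p (x * y) (k + j)"
  using vq_mult[of x y] unfolding vge_def by (cases "x = 0"; cases "y = 0"; auto)
lemma vge_int: "vge p (of_int a) 0" using vq_int_nonneg by (simp add: vge_def)

end

context pctx begin

definition cau :: "(nat \<Rightarrow> rat) \<Rightarrow> bool" where
  "cau X \<longleftrightarrow> (\<forall>k. \<exists>N. \<forall>m\<ge>N. \<forall>n\<ge>N. vge p (X m - X n) k)"

definition eqv :: "(nat \<Rightarrow> rat) \<Rightarrow> (nat \<Rightarrow> rat) \<Rightarrow> bool" where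
  "eqv X Y \<longleftrightarrow> (\<forall>k. \<exists>N. \<forall>n\<ge>N. vge p (X n - Y n) k)"

lemma p_gt1: "real p > 1" using prime_gt_1_nat[OF prime_p] by simp

lemma abs_eq: "q \<noteq> 0 \<Longrightarrow> padic_abs p q = real p powr (- of_int (vq p q))"
  unfolding padic_abs_def vq_def by (auto split: prod.splits)

lemma abs_nonneg: "padic_abs p q \<ge> 0"
  unfolding padic_abs_def by (auto split: prod.splits)

lemma abs_lt: "padic_abs p q < real p powr (- of_int k) \<longleftrightarrow> vge p q (k + 1)"
proof (cases "q = 0")
  case True then show ?thesis using p_gt1 by (simp add: padic_abs_def vge_def)
next
  case False
  have "padic_abs p q < real p powr (- of_int k) \<longleftrightarrow> - of_int (vq p q) < (- of_int k :: real)"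
    using abs_eq[OF False] powr_less_cancel_iff[OF p_gt1] by simp
  also have "\<dots> \<longleftrightarrow> k + 1 \<le> vq p q" by linarith
  finally show ?thesis using False by (simp add: vge_def)
qed

lemma small: assumes "e > 0" shows "\<exists>k::int. real p powr (- of_int k) < e"
proof -
  have "1 / real p < 1" using p_gt1 by simp
  then obtain n where n: "(1 / real p) ^ n < e" using real_arch_pow_inv[OF assms] by blast
  have "real p powr (- of_int (int n)) = (1 / real p) ^ n"
    using p_gt1 by (simp add: powr_minus powr_realpow power_inverse divide_inverse)
  then show ?thesis using n by metis
qed

lemma cauchy_iff: "padic_cauchy p X \<longleftrightarrow> cau X"
proof
  assume H: "padic_cauchy p X"
  show "cau X" unfolding cau_def
  proof
    fix k
    have "real p powr (- of_int (k - 1)) > 0" using p_gt1 by simp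
    then obtain N where "\<forall>m\<ge>N. \<forall>n\<ge>N. padic_abs p (X m - X n) < real p powr (- of_int (k - 1))"
      using H unfolding padic_cauchy_def by blast
    then show "\<exists>N. \<forall>m\<ge>N. \<forall>n\<ge>N. vge p (X m - X n) k" using abs_lt[of _ "k - 1"] by auto
  qed
next
  assume H: "cau X"
  show "padic_cauchy p X" unfolding padic_cauchy_def
  proof (intro allI impI)
    fix e :: real assume "e > 0"
    then obtain k where k: "real p powr (- of_int k) < e" using small by blast
    obtain N where "\<forall>m\<ge>N. \<forall>n\<ge>N. vge p (X m - X n) (k + 1)" using H unfolding cau_def by blast
    then show "\<exists>N. \<forall>m\<ge>N. \<forall>n\<ge>N. padic_abs p (X m - X n) < e"
      using abs_lt k by (meson less_trans)
  qed
qed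

lemma equiv_iff: "padic_equiv p X Y \<longleftrightarrow> eqv X Y"
proof
  assume H: "padic_equiv p X Y"
  show "eqv X Y" unfolding eqv_def
  proof
    fix k
    have "real p powr (- of_int (k - 1)) > 0" using p_gt1 by simp
    then obtain N where "\<forall>n\<ge>N. norm (padic_abs p (X n - Y n) - 0) < real p powr (- of_int (k - 1))"
      using H unfolding padic_equiv_def LIMSEQ_iff by blast
    then show "\<exists>N. \<forall>n\<ge>N. vge p (X n - Y n) k" using abs_lt[of _ "k - 1"] abs_nonneg by auto
  qed
next
  assume H: "eqv X Y"
  show "padic_equiv p X Y" unfolding padic_equiv_def LIMSEQ_iff
  proof (intro allI impI)
    fix e :: real assume "e > 0"
    then obtain k where k: "real p powr (- of_int k) < e" using small by blast
    obtain N where "\<forall>n\<ge>N. vge p (X n - Y n) (k + 1)" using H unfolding eqv_def by blast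
    then show "\<exists>N. \<forall>n\<ge>N. norm (padic_abs p (X n - Y n) - 0) < e"
      using abs_lt k abs_nonneg by (metis abs_of_nonneg diff_zero less_trans real_norm_def)
  qed
qed

abbreviation cls where "cls X \<equiv> padic_class p X"

lemma cls_def': "cls X = {Y. cau Y \<and> eqv X Y}"
  unfolding padic_class_def cauchy_iff equiv_iff ..

lemma padic_def': "padic p = {cls X | X. cau X}"
  unfolding padic_def cauchy_iff ..

lemma eqv_refl: "eqv X X" unfolding eqv_def by simp

lemma eqv_sym: "eqv X Y \<Longrightarrow> eqv Y X"
  unfolding eqv_def using vge_minus[of "X _ - Y _"] by (simp add: minus_diff_eq)

lemma eqv_trans: assumes "eqv X Y" "eqv Y Z" shows "eqv X Z"
  unfolding eqv_def
proof
  fix k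
  obtain N1 where "\<forall>n\<ge>N1. vge p (X n - Y n) k" using assms(1) unfolding eqv_def by blast
  moreover obtain N2 where "\<forall>n\<ge>N2. vge p (Y n - Z n) k" using assms(2) unfolding eqv_def by blast
  ultimately have "\<forall>n\<ge>max N1 N2. vge p (X n - Z n) k"
  proof (intro allI impI)
    fix n assume "\<forall>n\<ge>N1. vge p (X n - Y n) k" "\<forall>n\<ge>N2. vge p (Y n - Z n) k" "n \<ge> max N1 N2"
    then have "vge p (X n - Y n) k" "vge p (Y n - Z n) k" by auto
    then have "vge p ((X n - Y n) + (Y n - Z n)) k" using vge_add by blast
    then show "vge p (X n - Z n) k" by simp
  qed
  then show "\<exists>N. \<forall>n\<ge>N. vge p (X n - Z n) k" by blast
qed

lemma cau_eqv: assumes "cau X" "eqv X Y" shows "cau Y"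
  unfolding cau_def
proof
  fix k
  obtain N1 where N1: "\<forall>m\<ge>N1. \<forall>n\<ge>N1. vge p (X m - X n) k" using assms(1) unfolding cau_def by blast
  obtain N2 where N2: "\<forall>n\<ge>N2. vge p (X n - Y n) k" using assms(2) unfolding eqv_def by blast
  have "\<forall>m\<ge>max N1 N2. \<forall>n\<ge>max N1 N2. vge p (Y m - Y n) k"
  proof (intro allI impI)
    fix m n assume "m \<ge> max N1 N2" "n \<ge> max N1 N2"
    then have a: "vge p (X m - X n) k" "vge p (X m - Y m) k" "vge p (X n - Y n) k" using N1 N2 by auto
    have "Y m - Y n = (X m - X n) - (X m - Y m) + (X n - Y n)" by simp
    then show "vge p (Y m - Y n) k" using a vge_add vge_diff by presburger
  qed
  then show "\<exists>N. \<forall>m\<ge>N. \<forall>n\<ge>N. vge p (Y m - Y n) k" by blast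
qed

lemma in_cls: "Y \<in> cls X \<longleftrightarrow> cau Y \<and> eqv X Y" unfolding cls_def' by simp

lemma cls_self: "cau X \<Longrightarrow> X \<in> cls X" using in_cls eqv_refl by simp

lemma cls_eqI: "eqv X Y \<Longrightarrow> cls X = cls Y"
  unfolding cls_def' using eqv_trans eqv_sym by blast

lemma cls_eq_iff: "cau X \<Longrightarrow> cls X = cls Y \<longleftrightarrow> eqv X Y"
  using cls_eqI cls_self in_cls eqv_sym by blast

lemma cls_in: "cau X \<Longrightarrow> cls X \<in> padic p" unfolding padic_def' by blast

lemma padicE: assumes "x \<in> padic p" obtains X where "cau X" "x = cls X"
  using assms unfolding padic_def' by blast

lemma rep_cls: assumes "cau X" shows "cau (padic_rep (cls X))" "eqv X (padic_rep (cls X))"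
proof -
  have "padic_rep (cls X) \<in> cls X" unfolding padic_rep_def by (rule someI[of "\<lambda>Y. Y \<in> cls X", OF cls_self[OF assms]])
  then show "cau (padic_rep (cls X))" "eqv X (padic_rep (cls X))" using in_cls by auto
qed

lemma rep_in: assumes "x \<in> padic p" shows "cau (padic_rep x)" "x = cls (padic_rep x)"
proof -
  obtain X where X: "cau X" "x = cls X" using padicE[OF assms] .
  show "cau (padic_rep x)" using rep_cls X by simp
  show "x = cls (padic_rep x)" using rep_cls X cls_eqI by simp
qed

lemma cau_const: "cau (\<lambda>n. c)" unfolding cau_def by simp

lemma eqv_add: assumes "eqv X X'" "eqv Y Y'" shows "eqv (\<lambda>n. X n + Y n) (\<lambda>n. X' n + Y' n)"
  unfolding eqv_def
proof
  fix k
  obtain N1 where N1: "\<forall>n\<ge>N1. vge p (X n - X' n) k" using assms(1) unfolding eqv_def by blast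
  obtain N2 where N2: "\<forall>n\<ge>N2. vge p (Y n - Y' n) k" using assms(2) unfolding eqv_def by blast
  have "\<forall>n\<ge>max N1 N2. vge p ((X n + Y n) - (X' n + Y' n)) k"
  proof (intro allI impI)
    fix n assume "n \<ge> max N1 N2"
    then have "vge p (X n - X' n + (Y n - Y' n)) k" using N1 N2 vge_add by simp
    then show "vge p ((X n + Y n) - (X' n + Y' n)) k" by (simp add: algebra_simps)
  qed
  then show "\<exists>N. \<forall>n\<ge>N. vge p ((X n + Y n) - (X' n + Y' n)) k" by blast
qed

lemma eqv_minus: assumes "eqv X X'" shows "eqv (\<lambda>n. - X n) (\<lambda>n. - X' n)"
  using assms unfolding eqv_def by (metis minus_diff_eq minus_diff_minus vge_minus)

lemma eqv_diff: assumes "eqv X X'" "eqv Y Y'" shows "eqv (\<lambda>n. X n - Y n) (\<lambda>n. X' n - Y' n)"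
  using eqv_add[OF assms(1) eqv_minus[OF assms(2)]] by simp

lemma cau_add: "cau X \<Longrightarrow> cau Y \<Longrightarrow> cau (\<lambda>n. X n + Y n)"
proof -
  assume a: "cau X" "cau Y"
  show ?thesis unfolding cau_def
  proof
    fix k
    obtain N1 where N1: "\<forall>m\<ge>N1. \<forall>n\<ge>N1. vge p (X m - X n) k" using a(1) unfolding cau_def by blast
    obtain N2 where N2: "\<forall>m\<ge>N2. \<forall>n\<ge>N2. vge p (Y m - Y n) k" using a(2) unfolding cau_def by blast
    have "\<forall>m\<ge>max N1 N2. \<forall>n\<ge>max N1 N2. vge p ((X m + Y m) - (X n + Y n)) k"
    proof (intro allI impI)
      fix m n assume "m \<ge> max N1 N2" "n \<ge> max N1 N2"
      then have "vge p (X m - X n + (Y m - Y n)) k" using N1 N2 vge_add by simp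
      then show "vge p ((X m + Y m) - (X n + Y n)) k" by (simp add: algebra_simps)
    qed
    then show "\<exists>N. \<forall>m\<ge>N. \<forall>n\<ge>N. vge p ((X m + Y m) - (X n + Y n)) k" by blast
  qed
qed

lemma cau_minus: "cau X \<Longrightarrow> cau (\<lambda>n. - X n)"
  unfolding cau_def by (metis minus_diff_eq minus_diff_minus vge_minus)

lemma cau_diff: "cau X \<Longrightarrow> cau Y \<Longrightarrow> cau (\<lambda>n. X n - Y n)"
  using cau_add[of X "\<lambda>n. - Y n"] cau_minus[of Y] by simp

lemma cau_bounded: assumes "cau X" shows "\<exists>B. \<forall>n. vge p (X n) B"
proof -
  obtain N where N: "\<forall>m\<ge>N. \<forall>n\<ge>N. vge p (X m - X n) 0" using assms unfolding cau_def by blast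
  define B where "B = - (\<Sum>n\<le>N. \<bar>vq p (X n)\<bar>)"
  have le: "\<And>n. n \<le> N \<Longrightarrow> \<bar>vq p (X n)\<bar> \<le> (\<Sum>n\<le>N. \<bar>vq p (X n)\<bar>)"
    by (rule member_le_sum) auto
  have B0: "B \<le> 0" unfolding B_def by (simp add: sum_nonneg)
  have small: "\<And>n. n \<le> N \<Longrightarrow> vge p (X n) B"
    using le unfolding B_def vge_def by (metis abs_le_iff minus_le_iff)
  have "vge p (X n) B" for n
  proof (cases "n \<le> N")
    case True then show ?thesis using small by simp
  next
    case False
    then have "vge p (X n - X N) 0" using N by simp
    then have "vge p (X n - X N) B" using vge_mono B0 by blast
    moreover have "vge p (X N) B" using small by simp
    ultimately show ?thesis using vge_add by fastforce
  qed
  then show ?thesis by blast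
qed

lemma cau_eqv_mult_aux: assumes "eqv Y Y'" "\<forall>n. vge p (X n) B" shows "eqv (\<lambda>n. X n * Y n) (\<lambda>n. X n * Y' n)"
  unfolding eqv_def
proof
  fix k
  obtain N where N: "\<forall>n\<ge>N. vge p (Y n - Y' n) (k - B)" using assms(1) unfolding eqv_def by blast
  have "\<forall>n\<ge>N. vge p (X n * Y n - X n * Y' n) k"
  proof (intro allI impI)
    fix n assume "n \<ge> N"
    then have "vge p (X n * (Y n - Y' n)) (B + (k - B))" using N assms(2) vge_mult by blast
    then show "vge p (X n * Y n - X n * Y' n) k" by (simp add: algebra_simps)
  qed
  then show "\<exists>N. \<forall>n\<ge>N. vge p (X n * Y n - X n * Y' n) k" by blast
qed

lemma eqv_mult: assumes "cau X" "cau Y'" "eqv X X'" "eqv Y Y'"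
  shows "eqv (\<lambda>n. X n * Y n) (\<lambda>n. X' n * Y' n)"
proof -
  obtain B where B: "\<forall>n. vge p (X n) B" using cau_bounded[OF assms(1)] by blast
  obtain B' where B': "\<forall>n. vge p (Y' n) B'" using cau_bounded[OF assms(2)] by blast
  have 1: "eqv (\<lambda>n. X n * Y n) (\<lambda>n. X n * Y' n)" using cau_eqv_mult_aux[OF assms(4) B] .
  have "eqv (\<lambda>n. Y' n * X n) (\<lambda>n. Y' n * X' n)" using cau_eqv_mult_aux[OF assms(3) B'] .
  then have 2: "eqv (\<lambda>n. X n * Y' n) (\<lambda>n. X' n * Y' n)" by (simp add: mult.commute)
  show ?thesis using eqv_trans[OF 1 2] .
qed

lemma cau_mult: assumes "cau X" "cau Y" shows "cau (\<lambda>n. X n * Y n)"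
  unfolding cau_def
proof
  fix k
  obtain B where B: "\<forall>n. vge p (X n) B" using cau_bounded[OF assms(1)] by blast
  obtain B' where B': "\<forall>n. vge p (Y n) B'" using cau_bounded[OF assms(2)] by blast
  obtain N1 where N1: "\<forall>m\<ge>N1. \<forall>n\<ge>N1. vge p (X m - X n) (k - B')" using assms(1) unfolding cau_def by blast
  obtain N2 where N2: "\<forall>m\<ge>N2. \<forall>n\<ge>N2. vge p (Y m - Y n) (k - B)" using assms(2) unfolding cau_def by blast
  have "\<forall>m\<ge>max N1 N2. \<forall>n\<ge>max N1 N2. vge p (X m * Y m - X n * Y n) k"
  proof (intro allI impI)
    fix m n assume "m \<ge> max N1 N2" "n \<ge> max N1 N2"
    then have "vge p (Y m - Y n) (k - B)" "vge p (X m - X n) (k - B')" using N1 N2 by auto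
    then have "vge p (X m * (Y m - Y n)) (B + (k - B))" "vge p ((X m - X n) * Y n) ((k - B') + B')"
      using B B' vge_mult by blast+
    then have a: "vge p (X m * (Y m - Y n)) k" "vge p ((X m - X n) * Y n) k" by simp_all
    have "X m * Y m - X n * Y n = X m * (Y m - Y n) + (X m - X n) * Y n" by (simp add: algebra_simps)
    then show "vge p (X m * Y m - X n * Y n) k" using a vge_add by simp
  qed
  then show "\<exists>N. \<forall>m\<ge>N. \<forall>n\<ge>N. vge p (X m * Y m - X n * Y n) k" by blast
qed

lemma nonnull_const:
  assumes "cau X" "\<not> eqv X (\<lambda>n. 0)"
  shows "\<exists>N K. \<forall>n\<ge>N. X n \<noteq> 0 \<and> vq p (X n) = K"
proof -
  obtain k where k: "\<forall>N. \<exists>n\<ge>N. \<not> vge p (X n) k" using assms(2) unfolding eqv_def by auto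
  obtain N where N: "\<forall>m\<ge>N. \<forall>n\<ge>N. vge p (X m - X n) k" using assms(1) unfolding cau_def by blast
  obtain n0 where n0: "n0 \<ge> N" "\<not> vge p (X n0) k" using k by blast
  have x0: "X n0 \<noteq> 0" "vq p (X n0) < k" using n0 unfolding vge_def by auto
  have "\<forall>n\<ge>N. X n \<noteq> 0 \<and> vq p (X n) = vq p (X n0)"
  proof (intro allI impI)
    fix n assume "n \<ge> N"
    then have d: "vge p (X n - X n0) k" using N n0 by simp
    show "X n \<noteq> 0 \<and> vq p (X n) = vq p (X n0)"
    proof (cases "X n - X n0 = 0")
      case True then show ?thesis using x0 by simp
    next
      case False
      then have "vq p (X n0) < vq p (X n - X n0)" using d x0 unfolding vge_def by simp
      from vq_add_strict[OF x0(1) False this] show ?thesis by simp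
    qed
  qed
  then show ?thesis by blast
qed

lemma inv_diff_vge:
  assumes "a \<noteq> 0" "b \<noteq> 0" "vq p a = K" "vq p b = K" "vge p (a - b) (k + 2 * K)"
  shows "vge p (inverse a - inverse b) k"
proof -
  have e: "inverse a - inverse b = (b - a) * (inverse a * inverse b)" using assms(1,2) by (simp add: field_simps)
  have "vge p (inverse a * inverse b) (- 2 * K)"
    using vq_mult[of "inverse a" "inverse b"] vq_inverse assms(1-4) unfolding vge_def by simp
  moreover have "vge p (b - a) (k + 2 * K)" using assms(5) vge_minus by (metis minus_diff_eq)
  ultimately have "vge p ((b - a) * (inverse a * inverse b)) ((k + 2 * K) + (- 2 * K))" using vge_mult by blast
  then show ?thesis using e by simp
qed

lemma cau_inverse: assumes "cau X" "\<not> eqv X (\<lambda>n. 0)" shows "cau (\<lambda>n. inverse (X n))"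
  unfolding cau_def
proof
  fix k
  obtain N K where NK: "\<forall>n\<ge>N. X n \<noteq> 0 \<and> vq p (X n) = K" using nonnull_const[OF assms] by blast
  obtain N1 where N1: "\<forall>m\<ge>N1. \<forall>n\<ge>N1. vge p (X m - X n) (k + 2 * K)" using assms(1) unfolding cau_def by blast
  have "\<forall>m\<ge>max N N1. \<forall>n\<ge>max N N1. vge p (inverse (X m) - inverse (X n)) k"
    using NK N1 inv_diff_vge by simp
  then show "\<exists>N. \<forall>m\<ge>N. \<forall>n\<ge>N. vge p (inverse (X m) - inverse (X n)) k" by blast
qed

lemma eqv_inverse: assumes "cau X" "\<not> eqv X (\<lambda>n. 0)" "eqv X Y"
  shows "eqv (\<lambda>n. inverse (X n)) (\<lambda>n. inverse (Y n))"
  unfolding eqv_def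
proof
  fix k
  have cY: "cau Y" using cau_eqv assms by blast
  have nY: "\<not> eqv Y (\<lambda>n. 0)" using assms eqv_trans by blast
  obtain N K where NK: "\<forall>n\<ge>N. X n \<noteq> 0 \<and> vq p (X n) = K" using nonnull_const[OF assms(1,2)] by blast
  obtain N' K' where NK': "\<forall>n\<ge>N'. Y n \<noteq> 0 \<and> vq p (Y n) = K'" using nonnull_const[OF cY nY] by blast
  obtain N1 where N1: "\<forall>n\<ge>N1. vge p (X n - Y n) (max (k + 2 * K) (K + 1))" using assms(3) unfolding eqv_def by blast
  have KK: "K' = K"
  proof -
    define n where "n = max N (max N' N1)"
    have a: "X n \<noteq> 0" "vq p (X n) = K" "Y n \<noteq> 0" "vq p (Y n) = K'"
      using NK NK' unfolding n_def by auto
    have "vge p (X n - Y n) (max (k + 2 * K) (K + 1))" using N1 unfolding n_def by auto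
    then have a5: "vge p (X n - Y n) (K + 1)" using vge_mono by (meson max.cobounded2)
    show ?thesis
    proof (cases "Y n - X n = 0")
      case True then show ?thesis using a by simp
    next
      case False
      have "vge p (Y n - X n) (K + 1)" using a5 vge_minus by (metis minus_diff_eq)
      then have "vq p (X n) < vq p (Y n - X n)" using False a unfolding vge_def by simp
      from vq_add_strict(2)[OF a(1) False this] a show ?thesis by simp
    qed
  qed
  have "\<forall>n\<ge>max N (max N' N1). vge p (inverse (X n) - inverse (Y n)) k"
  proof (intro allI impI)
    fix n assume n: "n \<ge> max N (max N' N1)"
    have "vge p (X n - Y n) (max (k + 2 * K) (K + 1))" using N1 n by auto
    then have "vge p (X n - Y n) (k + 2 * K)" using vge_mono by (meson max.cobounded1)
    then show "vge p (inverse (X n) - inverse (Y n)) k" using inv_diff_vge NK NK' n KK by auto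
  qed
  then show "\<exists>N. \<forall>n\<ge>N. vge p (inverse (X n) - inverse (Y n)) k" by blast
qed

end

definition Qp :: "nat \<Rightarrow> (nat \<Rightarrow> rat) set ring" where
  "Qp p = \<lparr>carrier = padic p, mult = padic_mult p, one = padic_class p (\<lambda>n. 1),
           zero = padic_zero p, add = padic_add p\<rparr>"

context pctx begin

lemma add_cls: "cau X \<Longrightarrow> cau Y \<Longrightarrow> padic_add p (cls X) (cls Y) = cls (\<lambda>n. X n + Y n)"
  unfolding padic_add_def by (intro cls_eqI eqv_add eqv_sym[OF rep_cls(2)]) 

lemma sub_cls: "cau X \<Longrightarrow> cau Y \<Longrightarrow> padic_sub p (cls X) (cls Y) = cls (\<lambda>n. X n - Y n)"
  unfolding padic_sub_def by (intro cls_eqI eqv_diff eqv_sym[OF rep_cls(2)]) 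

lemma mult_cls: "cau X \<Longrightarrow> cau Y \<Longrightarrow> padic_mult p (cls X) (cls Y) = cls (\<lambda>n. X n * Y n)"
  unfolding padic_mult_def by (intro cls_eqI eqv_mult eqv_sym[OF rep_cls(2)] rep_cls(1)) 

lemma zero_cls: "padic_zero p = cls (\<lambda>n. 0)" unfolding padic_zero_def ..

lemma cls_zero_iff: "cau X \<Longrightarrow> cls X = padic_zero p \<longleftrightarrow> eqv X (\<lambda>n. 0)"
  unfolding zero_cls using cls_eq_iff by simp

lemma inverse_cls: assumes "cau X" "\<not> eqv X (\<lambda>n. 0)"
  shows "padic_inverse p (cls X) = cls (\<lambda>n. inverse (X n))"
proof -
  have "cls X \<noteq> padic_zero p" using cls_zero_iff assms by simp
  then have "padic_inverse p (cls X) = cls (\<lambda>n. inverse (padic_rep (cls X) n))"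
    unfolding padic_inverse_def by simp
  also have "\<dots> = cls (\<lambda>n. inverse (X n))"
    by (intro cls_eqI eqv_sym[OF eqv_inverse] assms rep_cls)
  finally show ?thesis .
qed

lemma carrier_Qp[simp]: "carrier (Qp p) = padic p" by (simp add: Qp_def)
lemma add_Qp[simp]: "add (Qp p) = padic_add p" by (simp add: Qp_def)
lemma mult_Qp[simp]: "mult (Qp p) = padic_mult p" by (simp add: Qp_def)
lemma zero_Qp[simp]: "zero (Qp p) = cls (\<lambda>n. 0)" by (simp add: Qp_def zero_cls)
lemma one_Qp[simp]: "one (Qp p) = cls (\<lambda>n. 1)" by (simp add: Qp_def)

lemma eqv_pointwise: "(\<And>n. X n = Y n) \<Longrightarrow> eqv X Y" unfolding eqv_def by simp

lemma Qp_cring: "cring (Qp p)"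
proof (rule cringI)
  show "abelian_group (Qp p)"
  proof (rule abelian_groupI, simp_all)
    fix x y assume "x \<in> padic p" "y \<in> padic p"
    then obtain X Y where "cau X" "cau Y" "x = cls X" "y = cls Y" by (auto elim!: padicE)
    then show "padic_add p x y \<in> padic p" by (simp add: add_cls cau_add cls_in)
  next
    show "cls (\<lambda>n. 0) \<in> padic p" by (intro cls_in cau_const)
  next
    fix x y z assume "x \<in> padic p" "y \<in> padic p" "z \<in> padic p"
    then obtain X Y Z where "cau X" "cau Y" "cau Z" "x = cls X" "y = cls Y" "z = cls Z" by (auto elim!: padicE)
    then show "padic_add p (padic_add p x y) z = padic_add p x (padic_add p y z)"
      by (simp add: add_cls cau_add add.assoc)
  next
    fix x y assume "x \<in> padic p" "y \<in> padic p"
    then obtain X Y where "cau X" "cau Y" "x = cls X" "y = cls Y" by (auto elim!: padicE)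
    then show "padic_add p x y = padic_add p y x"
      by (simp add: add_cls add.commute)
  next
    fix x assume "x \<in> padic p"
    then obtain X where "cau X" "x = cls X" by (auto elim!: padicE)
    then show "padic_add p (cls (\<lambda>n. 0)) x = x" by (simp add: add_cls cau_const)
  next
    fix x assume "x \<in> padic p"
    then obtain X where X: "cau X" "x = cls X" by (auto elim!: padicE)
    then have "padic_add p (cls (\<lambda>n. - X n)) x = cls (\<lambda>n. 0)" by (simp add: add_cls cau_minus)
    moreover have "cls (\<lambda>n. - X n) \<in> padic p" using X by (simp add: cls_in cau_minus)
    ultimately show "\<exists>y\<in>padic p. padic_add p y x = cls (\<lambda>n. 0)" by blast
  qed
next
  show "comm_monoid (Qp p)"
  proof (rule comm_monoidI, simp_all)
    fix x y assume "x \<in> padic p" "y \<in> padic p"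
    then obtain X Y where "cau X" "cau Y" "x = cls X" "y = cls Y" by (auto elim!: padicE)
    then show "padic_mult p x y \<in> padic p" by (simp add: mult_cls cau_mult cls_in)
  next
    show "cls (\<lambda>n. 1) \<in> padic p" by (intro cls_in cau_const)
  next
    fix x y z assume "x \<in> padic p" "y \<in> padic p" "z \<in> padic p"
    then obtain X Y Z where "cau X" "cau Y" "cau Z" "x = cls X" "y = cls Y" "z = cls Z" by (auto elim!: padicE)
    then show "padic_mult p (padic_mult p x y) z = padic_mult p x (padic_mult p y z)"
      by (simp add: mult_cls cau_mult mult.assoc)
  next
    fix x assume "x \<in> padic p"
    then obtain X where "cau X" "x = cls X" by (auto elim!: padicE)
    then show "padic_mult p (cls (\<lambda>n. 1)) x = x" by (simp add: mult_cls cau_const)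
  next
    fix x y assume "x \<in> padic p" "y \<in> padic p"
    then obtain X Y where "cau X" "cau Y" "x = cls X" "y = cls Y" by (auto elim!: padicE)
    then show "padic_mult p x y = padic_mult p y x"
      by (simp add: mult_cls mult.commute)
  qed
next
  fix x y z assume "x \<in> carrier (Qp p)" "y \<in> carrier (Qp p)" "z \<in> carrier (Qp p)"
  then obtain X Y Z where "cau X" "cau Y" "cau Z" "x = cls X" "y = cls Y" "z = cls Z" by (auto elim!: padicE)
  then show "(x \<oplus>\<^bsub>Qp p\<^esub> y) \<otimes>\<^bsub>Qp p\<^esub> z = x \<otimes>\<^bsub>Qp p\<^esub> z \<oplus>\<^bsub>Qp p\<^esub> y \<otimes>\<^bsub>Qp p\<^esub> z"
    by (simp add: mult_cls add_cls cau_mult cau_add distrib_right)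
qed

lemma not_eqv_01: "\<not> eqv (\<lambda>n. 0) (\<lambda>n. 1)"
proof
  assume "eqv (\<lambda>n. 0) (\<lambda>n. 1)"
  then obtain N where "vge p (0 - 1) 1" unfolding eqv_def by blast
  moreover have "vq p (-1) = 0" using vq_minus[of 1] vq_one by simp
  ultimately show False unfolding vge_def by simp
qed

lemma inv_exists: assumes "cau X" "\<not> eqv X (\<lambda>n. 0)"
  shows "padic_mult p (cls X) (cls (\<lambda>n. inverse (X n))) = cls (\<lambda>n. 1)"
proof -
  obtain N K where NK: "\<forall>n\<ge>N. X n \<noteq> 0 \<and> vq p (X n) = K" using nonnull_const[OF assms] by blast
  have "\<forall>n\<ge>N. vge p (X n * inverse (X n) - 1) k" for k using NK by simp
  then have "eqv (\<lambda>n. X n * inverse (X n)) (\<lambda>n. 1)" unfolding eqv_def by blast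
  then show ?thesis using assms by (simp add: mult_cls cau_inverse cls_eqI)
qed

lemma Qp_field: "field (Qp p)"
proof (rule cring.cring_fieldI2[OF Qp_cring])
  have "cls (\<lambda>n. 0) \<noteq> cls (\<lambda>n. 1)" using cls_eq_iff[OF cau_const, of 0 "\<lambda>n. 1"] not_eqv_01 by blast
  then show "\<zero>\<^bsub>Qp p\<^esub> \<noteq> \<one>\<^bsub>Qp p\<^esub>" by simp
next
  fix a assume a: "a \<in> carrier (Qp p)" "a \<noteq> \<zero>\<^bsub>Qp p\<^esub>"
  then obtain X where X: "cau X" "a = cls X" by (auto elim!: padicE)
  then have nX: "\<not> eqv X (\<lambda>n. 0)" using a cls_zero_iff[OF X(1)] by (simp add: zero_cls)
  show "\<exists>b\<in>carrier (Qp p). a \<otimes>\<^bsub>Qp p\<^esub> b = \<one>\<^bsub>Qp p\<^esub>"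
    using inv_exists[OF X(1) nX] cls_in[OF cau_inverse[OF X(1) nX]] X(2) by auto
qed

end

locale sdfield = field R + pctx p for R :: "'a ring" (structure) and p +
  fixes V :: "'a \<Rightarrow> int" and emb :: "rat \<Rightarrow> 'a"
  assumes emb_closed[simp]: "emb q \<in> carrier R"
  and emb_add: "emb (a + b) = emb a \<oplus> emb b"
  and emb_mult: "emb (a * b) = emb a \<otimes> emb b"
  and emb_one: "emb 1 = \<one>"
  and V_mult: "\<lbrakk>x \<in> carrier R; y \<in> carrier R; x \<noteq> \<zero>; y \<noteq> \<zero>\<rbrakk> \<Longrightarrow> V (x \<otimes> y) = V x + V y"
  and V_add: "\<lbrakk>x \<in> carrier R; y \<in> carrier R; x \<noteq> \<zero>; y \<noteq> \<zero>; x \<oplus> y \<noteq> \<zero>\<rbrakk> \<Longrightarrow> V (x \<oplus> y) \<ge> min (V x) (V y)"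
  and V_emb: "q \<noteq> 0 \<Longrightarrow> V (emb q) = vq p q"
  and approx: "\<lbrakk>x \<in> carrier R; x \<noteq> \<zero>\<rbrakk> \<Longrightarrow> \<exists>q. x \<ominus> emb q = \<zero> \<or> V (x \<ominus> emb q) \<ge> k"
  and sqrt_ex: "\<lbrakk>x \<in> carrier R; x \<ominus> \<one> = \<zero> \<or> V (x \<ominus> \<one>) \<ge> (if p = 2 then 3 else 1)\<rbrakk> \<Longrightarrow> \<exists>z\<in>carrier R. z \<otimes> z = x"
begin

lemma diff0: assumes R: "x \<in> carrier R" "y \<in> carrier R" shows "(x \<ominus> y = \<zero>) = (x = y)"
proof
  assume e: "x \<ominus> y = \<zero>"
  from R have "x = y \<oplus> (x \<ominus> y)" by algebra
  also have "\<dots> = y" using R e by simp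
  finally show "x = y" .
next
  assume "x = y" then show "x \<ominus> y = \<zero>" using R by algebra
qed

lemma inv_ok:
  assumes "x \<in> carrier R" "x \<noteq> \<zero>"
  shows "inv x \<in> carrier R" "x \<otimes> inv x = \<one>" "inv x \<otimes> x = \<one>" "inv x \<noteq> \<zero>"
proof -
  have u: "x \<in> Units R" using field_Units assms by simp
  show "inv x \<in> carrier R" "x \<otimes> inv x = \<one>" "inv x \<otimes> x = \<one>" using u by auto
  show "inv x \<noteq> \<zero>" proof
    assume "inv x = \<zero>" then have "x \<otimes> inv x = \<zero>" using assms by simp
    then show False using u by simp
  qed
qed

lemma mult_nz: "x \<in> carrier R \<Longrightarrow> y \<in> carrier R \<Longrightarrow> x \<noteq> \<zero> \<Longrightarrow> y \<noteq> \<zero> \<Longrightarrow> x \<otimes> y \<noteq> \<zero>"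
  using integral_iff by simp

lemma div_eq_iff:
  assumes "u \<in> carrier R" "v \<in> carrier R" "w \<in> carrier R" "z \<in> carrier R" "v \<noteq> \<zero>" "z \<noteq> \<zero>"
  shows "(u \<otimes> inv v = w \<otimes> inv z) = (u \<otimes> z = w \<otimes> v)"
proof -
  note iv = inv_ok[OF assms(2,5)] and iz = inv_ok[OF assms(4,6)]
  have "(u \<otimes> inv v = w \<otimes> inv z) = ((u \<otimes> inv v) \<otimes> (v \<otimes> z) = (w \<otimes> inv z) \<otimes> (v \<otimes> z))"
    using m_rcancel[of "v \<otimes> z"] mult_nz assms iv iz by simp
  also have "(u \<otimes> inv v) \<otimes> (v \<otimes> z) = u \<otimes> z \<otimes> (inv v \<otimes> v)" using assms(1-4) iv(1) by algebra
  also have "\<dots> = u \<otimes> z" using iv(3) assms by (metis m_closed r_one)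
  also have "(w \<otimes> inv z) \<otimes> (v \<otimes> z) = w \<otimes> v \<otimes> (inv z \<otimes> z)" using assms(1-4) iz(1) by algebra
  also have "\<dots> = w \<otimes> v" using iz(3) assms by (metis m_closed r_one)
  finally show ?thesis .
qed

lemma div_mult_eq:
  assumes "u \<in> carrier R" "v \<in> carrier R" "w \<in> carrier R" "v \<noteq> \<zero>"
  shows "(u \<otimes> inv v = w) = (u = w \<otimes> v)"
  using div_eq_iff[OF assms(1,2,3) one_closed assms(4)] assms inv_ok[of \<one>] by simp

lemma emb_zero[simp]: "emb 0 = \<zero>"
proof -
  have e: "emb 0 = emb 0 \<oplus> emb 0" using emb_add[of 0 0] by simp
  have c: "emb 0 \<in> carrier R" by simp
  have "emb 0 = (emb 0 \<oplus> emb 0) \<ominus> emb 0" using c by algebra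
  also have "\<dots> = emb 0 \<ominus> emb 0" using e by simp
  also have "\<dots> = \<zero>" using c by algebra
  finally show ?thesis .
qed

lemma emb_minus: "emb (- a) = \<ominus> emb a"
proof -
  have "emb (- a) \<oplus> emb a = \<zero>" using emb_add[of "- a" a] by simp
  then show ?thesis using minus_equality by simp
qed

lemma emb_diff: "emb (a - b) = emb a \<ominus> emb b"
  using emb_add[of a "- b"] emb_minus[of b] by (simp add: minus_eq)

lemma emb_nz: assumes "q \<noteq> 0" shows "emb q \<noteq> \<zero>"
proof
  assume "emb q = \<zero>"
  then have "emb (q * inverse q) = \<zero>" using emb_mult by simp
  then show False using assms emb_one by simp
qed

lemma emb_inj: "emb a = emb b \<Longrightarrow> a = b"
  using emb_nz[of "a - b"] emb_diff[of a b] diff0 by auto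

lemma emb_inverse: assumes "q \<noteq> 0" shows "emb (inverse q) = inv (emb q)"
proof -
  have "emb q \<otimes> emb (inverse q) = \<one>" using emb_mult[of q "inverse q"] assms emb_one by simp
  then show ?thesis using comm_inv_char[of "emb q" "emb (inverse q)"] by simp
qed

lemma emb_divide: assumes "b \<noteq> 0" shows "emb (a / b) = emb a \<otimes> inv (emb b)"
  using emb_mult[of a "inverse b"] emb_inverse[OF assms] by (simp add: divide_inverse)

lemma V_one: "V \<one> = 0" using V_emb[of 1] emb_one vq_one by simp

lemma V_inv: assumes "x \<in> carrier R" "x \<noteq> \<zero>" shows "V (inv x) = - V x"
  using V_mult[of x "inv x"] inv_ok[OF assms] assms V_one by simp

lemma V_div: assumes "x \<in> carrier R" "y \<in> carrier R" "x \<noteq> \<zero>" "y \<noteq> \<zero>" shows "V (x \<otimes> inv y) = V x - V y"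
  using V_mult[of x "inv y"] inv_ok[OF assms(2,4)] assms V_inv by simp

lemma V_neg: assumes "x \<in> carrier R" shows "V (\<ominus> x) = V x"
proof (cases "x = \<zero>")
  case False
  have m1: "\<ominus> \<one> \<noteq> \<zero>" by (metis minus_minus minus_zero one_closed zero_not_one zero_closed)
  have "(\<ominus> \<one>) \<otimes> (\<ominus> \<one>) = \<one>" by algebra
  then have "V (\<ominus> \<one>) + V (\<ominus> \<one>) = 0" using V_mult[of "\<ominus> \<one>" "\<ominus> \<one>"] m1 V_one by simp
  then have "V (\<ominus> \<one>) = 0" by simp
  moreover have "\<ominus> x = (\<ominus> \<one>) \<otimes> x" using assms by algebra
  ultimately show ?thesis using V_mult[of "\<ominus> \<one>" x] m1 False assms by simp
qed simp

lemma neg_nz: "x \<in> carrier R \<Longrightarrow> x \<noteq> \<zero> \<Longrightarrow> \<ominus> x \<noteq> \<zero>"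
  by (metis minus_minus minus_zero)

lemma V_add_strict:
  assumes "x \<in> carrier R" "y \<in> carrier R" "x \<noteq> \<zero>" "y \<noteq> \<zero>" "V x < V y"
  shows "x \<oplus> y \<noteq> \<zero>" "V (x \<oplus> y) = V x"
proof -
  show xy: "x \<oplus> y \<noteq> \<zero>"
  proof
    assume "x \<oplus> y = \<zero>" then have "y = \<ominus> x" using assms by (metis add.inv_equality add.m_comm)
    then show False using assms V_neg by simp
  qed
  have "V (x \<oplus> y) \<ge> V x" using V_add[OF assms(1-4) xy] assms by simp
  moreover have "x = (x \<oplus> y) \<oplus> (\<ominus> y)" using assms by algebra
  then have "V x \<ge> min (V (x \<oplus> y)) (V (\<ominus> y))"
    using V_add[of "x \<oplus> y" "\<ominus> y"] xy assms neg_nz by simp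
  ultimately show "V (x \<oplus> y) = V x" using assms V_neg[OF assms(2)] by linarith
qed

lemma V_add_ge:
  assumes "x \<in> carrier R" "y \<in> carrier R" "x = \<zero> \<or> V x \<ge> k" "y = \<zero> \<or> V y \<ge> k"
  shows "x \<oplus> y = \<zero> \<or> V (x \<oplus> y) \<ge> k"
  using assms V_add[of x y] by (cases "x = \<zero>"; cases "y = \<zero>"; force)


lemma two_emb: "\<one> \<oplus> \<one> = emb 2"
  using emb_add[of 1 1] emb_one by simp

lemma two_nz: "\<one> \<oplus> \<one> \<noteq> \<zero>" using two_emb emb_nz by simp

lemma nz_diff: "x \<in> carrier R \<Longrightarrow> y \<in> carrier R \<Longrightarrow> x \<noteq> y \<Longrightarrow> x \<ominus> y \<noteq> \<zero>"
  using diff0 by simp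

lemma Mob:
  assumes c: "a \<in> carrier R" "b \<in> carrier R" "c \<in> carrier R" "d \<in> carrier R" and "a \<noteq> b" "c \<noteq> d"
  shows "((a \<oplus> b) \<otimes> inv (a \<ominus> b) = (c \<oplus> d) \<otimes> inv (c \<ominus> d)) = (a \<otimes> d = c \<otimes> b)"
proof -
  have "((a \<oplus> b) \<otimes> inv (a \<ominus> b) = (c \<oplus> d) \<otimes> inv (c \<ominus> d)) = ((a \<oplus> b) \<otimes> (c \<ominus> d) = (c \<oplus> d) \<otimes> (a \<ominus> b))"
    using div_eq_iff nz_diff assms by simp
  also have "\<dots> = ((a \<oplus> b) \<otimes> (c \<ominus> d) \<ominus> (c \<oplus> d) \<otimes> (a \<ominus> b) = \<zero>)" using diff0 c by simp
  also have "(a \<oplus> b) \<otimes> (c \<ominus> d) \<ominus> (c \<oplus> d) \<otimes> (a \<ominus> b) = (\<one> \<oplus> \<one>) \<otimes> (c \<otimes> b \<ominus> a \<otimes> d)"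
    using c by algebra
  also have "(\<dots> = \<zero>) = (c \<otimes> b \<ominus> a \<otimes> d = \<zero>)" using integral_iff two_nz c by simp
  also have "\<dots> = (a \<otimes> d = c \<otimes> b)" using diff0 c by auto
  finally show ?thesis .
qed

end

locale sdmap = sdfield +
  fixes f :: "'a \<Rightarrow> 'a"
  assumes f_closed[simp]: "x \<in> carrier R \<Longrightarrow> f x \<in> carrier R"
  and f_inj: "\<lbrakk>x \<in> carrier R; y \<in> carrier R; x \<noteq> y\<rbrakk> \<Longrightarrow> f x \<noteq> f y"
  and f_D: "\<lbrakk>x \<in> carrier R; y \<in> carrier R; x \<noteq> y\<rbrakk> \<Longrightarrow>
     f ((x \<oplus> y) \<otimes> inv (x \<ominus> y)) = (f x \<oplus> f y) \<otimes> inv (f x \<ominus> f y)"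
begin

lemma D_x0: assumes "x \<in> carrier R" "x \<noteq> \<zero>" shows "(x \<oplus> \<zero>) \<otimes> inv (x \<ominus> \<zero>) = \<one>"
proof -
  have "x \<oplus> \<zero> = x" "x \<ominus> \<zero> = x" using assms by (simp_all add: minus_eq)
  then show ?thesis using inv_ok[OF assms] by simp
qed

lemma f0: "f \<zero> = \<zero>"
proof (rule ccontr)
  assume b: "f \<zero> \<noteq> \<zero>"
  have e1: "f \<one> = (f x \<oplus> f \<zero>) \<otimes> inv (f x \<ominus> f \<zero>)" if "x \<in> carrier R" "x \<noteq> \<zero>" for x
    using f_D[of x \<zero>] D_x0 that by simp
  have ne: "emb 2 \<noteq> \<one>" using emb_inj[of 2 1] emb_one by auto
  have "(f \<one> \<oplus> f \<zero>) \<otimes> inv (f \<one> \<ominus> f \<zero>) = (f (emb 2) \<oplus> f \<zero>) \<otimes> inv (f (emb 2) \<ominus> f \<zero>)"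
    using e1[of \<one>] e1[of "emb 2"] emb_nz[of 2] by simp
  then have "f \<one> \<otimes> f \<zero> = f (emb 2) \<otimes> f \<zero>"
    using Mob[of "f \<one>" "f \<zero>" "f (emb 2)" "f \<zero>"] f_inj[of \<one> \<zero>] f_inj[of "emb 2" \<zero>] emb_nz[of 2] by simp
  then have "f \<one> = f (emb 2)" using m_rcancel[OF b] by simp
  then show False using f_inj[of \<one> "emb 2"] ne by auto
qed

lemma f_nz: "x \<in> carrier R \<Longrightarrow> x \<noteq> \<zero> \<Longrightarrow> f x \<noteq> \<zero>"
  using f_inj[of x \<zero>] f0 by simp

lemma f1: "f \<one> = \<one>"
proof -
  have "f \<one> = (f \<one> \<oplus> \<zero>) \<otimes> inv (f \<one> \<ominus> \<zero>)" using f_D[of \<one> \<zero>] D_x0[of \<one>] f0 by simp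
  also have "\<dots> = \<one>" using D_x0[of "f \<one>"] f_nz[of \<one>] by simp
  finally show ?thesis .
qed

lemma f_neg: assumes "x \<in> carrier R" shows "f (\<ominus> x) = \<ominus> f x"
proof (cases "x = \<zero>")
  case True then show ?thesis using f0 by simp
next
  case False
  have ne: "x \<noteq> \<ominus> x"
  proof
    assume "x = \<ominus> x"
    then have "(\<one> \<oplus> \<one>) \<otimes> x = x \<oplus> \<ominus> x" using assms by (metis l_distr l_one one_closed)
    also have "\<dots> = \<zero>" using assms by (simp add: r_neg)
    finally show False using integral_iff two_nz False assms by simp
  qed
  have "(x \<oplus> \<ominus> x) \<otimes> inv (x \<ominus> \<ominus> x) = \<zero>" using assms by (simp add: r_neg nz_diff ne inv_ok)
  then have "\<zero> = (f x \<oplus> f (\<ominus> x)) \<otimes> inv (f x \<ominus> f (\<ominus> x))" using f_D[of x "\<ominus> x"] assms ne f0 by simp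
  then have "f x \<oplus> f (\<ominus> x) = \<zero>"
    using integral_iff inv_ok nz_diff f_inj[of x "\<ominus> x"] ne assms by (metis a_closed a_inv_closed f_closed minus_closed)
  then show ?thesis using assms by (metis a_inv_closed add.inv_equality add.m_comm f_closed)
qed

lemma f_divx: assumes "x \<in> carrier R" "y \<in> carrier R" "y \<noteq> \<zero>" shows "f (x \<otimes> inv y) \<otimes> f y = f x"
proof (cases "x = y")
  case True then show ?thesis using inv_ok[OF assms(2,3)] f1 assms by simp
next
  case False
  note iy = inv_ok[OF assms(2,3)]
  define t where "t = x \<otimes> inv y"
  have tc: "t \<in> carrier R" unfolding t_def using iy assms by simp
  have ty: "t \<otimes> y = x" unfolding t_def using div_mult_eq[of x y "x \<otimes> inv y"] assms iy by simp
  have t1: "t \<noteq> \<one>" using ty False assms by auto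
  have "(x \<oplus> y) \<otimes> inv (x \<ominus> y) = (t \<oplus> \<one>) \<otimes> inv (t \<ominus> \<one>)"
    using Mob[of x y t \<one>] assms tc t1 False ty by simp
  then have "(f x \<oplus> f y) \<otimes> inv (f x \<ominus> f y) = (f t \<oplus> f \<one>) \<otimes> inv (f t \<ominus> f \<one>)"
    using f_D[of x y] f_D[of t \<one>] assms tc t1 False by simp
  then have "f x \<otimes> f \<one> = f t \<otimes> f y"
    using Mob[of "f x" "f y" "f t" "f \<one>"] f_inj[of x y] f_inj[of t \<one>] assms tc t1 False by simp
  then show ?thesis using f1 assms t_def by simp
qed

lemma f_mult: assumes "a \<in> carrier R" "b \<in> carrier R" shows "f (a \<otimes> b) = f a \<otimes> f b"
proof (cases "b = \<zero>")
  case True then show ?thesis using f0 assms by simp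
next
  case False
  note ib = inv_ok[OF assms(2) False]
  have "(a \<otimes> b) \<otimes> inv b = a" using div_mult_eq[of "a \<otimes> b" b a] assms False ib by simp
  then show ?thesis using f_divx[of "a \<otimes> b" b] assms False by simp
qed

lemma f_inv: assumes "y \<in> carrier R" "y \<noteq> \<zero>" shows "f (inv y) = inv (f y)"
proof -
  have "f (inv y) \<otimes> f y = \<one>" using f_divx[of \<one> y] assms f1 inv_ok[OF assms] by simp
  then show ?thesis using comm_inv_char[of "f y" "f (inv y)"] inv_ok assms by (simp add: m_comm)
qed

lemma f_E: assumes "x \<in> carrier R" "y \<in> carrier R" "x \<noteq> y"
  shows "f (x \<oplus> y) \<otimes> (f x \<ominus> f y) = (f x \<oplus> f y) \<otimes> f (x \<ominus> y)"
proof -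
  have d: "x \<ominus> y \<noteq> \<zero>" using nz_diff assms by simp
  have "f ((x \<oplus> y) \<otimes> inv (x \<ominus> y)) = f (x \<oplus> y) \<otimes> inv (f (x \<ominus> y))"
    using f_mult f_inv d assms inv_ok by simp
  then have "f (x \<oplus> y) \<otimes> inv (f (x \<ominus> y)) = (f x \<oplus> f y) \<otimes> inv (f x \<ominus> f y)" using f_D assms by simp
  then show ?thesis
    using div_eq_iff[of "f (x \<oplus> y)" "f (x \<ominus> y)" "f x \<oplus> f y" "f x \<ominus> f y"] f_nz d nz_diff f_inj assms by simp
qed

end

context sdmap begin

lemma emb_of_nat_Suc: "emb (of_nat (Suc n)) = emb (of_nat n) \<oplus> \<one>"
  using emb_add[of "of_nat n" 1] emb_one by (simp add: add.commute)

lemma emb_ne: "a \<noteq> b \<Longrightarrow> emb a \<noteq> emb b" using emb_inj by auto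

lemma f_two: "f (emb 2) = emb 2"
proof -
  define a where "a = f (emb 2)"
  define b where "b = f (emb 3)"
  define c where "c = f (emb 5)"
  have ca: "a \<in> carrier R" "b \<in> carrier R" "c \<in> carrier R" unfolding a_def b_def c_def by simp_all
  have e: "emb 2 \<oplus> \<one> = emb 3" "emb 2 \<ominus> \<one> = \<one>" "emb 4 \<oplus> \<one> = emb 5" "emb 4 \<ominus> \<one> = emb 3"
      "emb 3 \<oplus> emb 2 = emb 5" "emb 3 \<ominus> emb 2 = \<one>" "emb 4 = emb 2 \<otimes> emb 2"
    using emb_add[of 2 1] emb_diff[of 2 1] emb_add[of 4 1] emb_diff[of 4 1] emb_add[of 3 2] emb_diff[of 3 2]
      emb_mult[of 2 2] emb_one by simp_all
  have n: "emb 2 \<noteq> \<one>" "emb 4 \<noteq> \<one>" "emb 3 \<noteq> emb 2"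
    using emb_ne[of 2 1] emb_ne[of 4 1] emb_ne[of 3 2] emb_one by auto
  have H1: "b \<otimes> (a \<ominus> \<one>) = (a \<oplus> \<one>) \<otimes> \<one>"
    using f_E[of "emb 2" \<one>] e n f1 unfolding a_def b_def by simp
  have H2: "c \<otimes> (a \<otimes> a \<ominus> \<one>) = (a \<otimes> a \<oplus> \<one>) \<otimes> b"
    using f_E[of "emb 4" \<one>] e n f1 f_mult[of "emb 2" "emb 2"] unfolding a_def b_def c_def by simp
  have H3: "c \<otimes> (b \<ominus> a) = (b \<oplus> a) \<otimes> \<one>"
    using f_E[of "emb 3" "emb 2"] e n f1 unfolding a_def b_def c_def by simp
  have H1': "b \<otimes> (a \<ominus> \<one>) = a \<oplus> \<one>" using H1 ca by simp
  have H3': "c \<otimes> (b \<ominus> a) = b \<oplus> a" using H3 ca by simp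
  have A1: "c \<otimes> (a \<ominus> \<one>) \<otimes> (a \<ominus> \<one>) \<otimes> (a \<oplus> \<one>) = c \<otimes> (a \<otimes> a \<ominus> \<one>) \<otimes> (a \<ominus> \<one>)"
    using ca by algebra
  also have "\<dots> = (a \<otimes> a \<oplus> \<one>) \<otimes> b \<otimes> (a \<ominus> \<one>)" using H2 by simp
  also have "\<dots> = (a \<otimes> a \<oplus> \<one>) \<otimes> (b \<otimes> (a \<ominus> \<one>))" using ca by algebra
  also have "\<dots> = (a \<otimes> a \<oplus> \<one>) \<otimes> (a \<oplus> \<one>)" using H1' by simp
  finally have A: "c \<otimes> (a \<ominus> \<one>) \<otimes> (a \<ominus> \<one>) \<otimes> (a \<oplus> \<one>) = (a \<otimes> a \<oplus> \<one>) \<otimes> (a \<oplus> \<one>)" .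
  have B1: "c \<otimes> (b \<ominus> a) \<otimes> (a \<ominus> \<one>) = c \<otimes> (b \<otimes> (a \<ominus> \<one>) \<ominus> a \<otimes> (a \<ominus> \<one>))" using ca by algebra
  also have "\<dots> = c \<otimes> ((a \<oplus> \<one>) \<ominus> a \<otimes> (a \<ominus> \<one>))" using H1' by simp
  finally have B2: "c \<otimes> (b \<ominus> a) \<otimes> (a \<ominus> \<one>) = c \<otimes> ((a \<oplus> \<one>) \<ominus> a \<otimes> (a \<ominus> \<one>))" .
  have "(b \<oplus> a) \<otimes> (a \<ominus> \<one>) = b \<otimes> (a \<ominus> \<one>) \<oplus> a \<otimes> (a \<ominus> \<one>)" using ca by algebra
  also have "\<dots> = (a \<oplus> \<one>) \<oplus> a \<otimes> (a \<ominus> \<one>)" using H1' by simp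
  also have "\<dots> = a \<otimes> a \<oplus> \<one>" using ca by algebra
  finally have B3: "(b \<oplus> a) \<otimes> (a \<ominus> \<one>) = a \<otimes> a \<oplus> \<one>" .
  have B: "c \<otimes> ((a \<oplus> \<one>) \<ominus> a \<otimes> (a \<ominus> \<one>)) = a \<otimes> a \<oplus> \<one>" using B2 B3 H3' by simp
  have ap1: "a \<oplus> \<one> \<noteq> \<zero>"
  proof
    assume "a \<oplus> \<one> = \<zero>"
    then have "a = \<ominus> \<one>" using ca by (metis add.inv_equality one_closed)
    then have "f (emb 2) = f (emb (-1))" using f_neg[of \<one>] f1 emb_minus[of 1] emb_one unfolding a_def by simp
    then show False using f_inj[of "emb 2" "emb (-1)"] emb_ne[of 2 "-1"] by auto
  qed
  have A0: "c \<otimes> (a \<ominus> \<one>) \<otimes> (a \<ominus> \<one>) = a \<otimes> a \<oplus> \<one>"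
    using A m_rcancel[OF ap1, of "c \<otimes> (a \<ominus> \<one>) \<otimes> (a \<ominus> \<one>)" "a \<otimes> a \<oplus> \<one>"] ca by simp
  have A': "c \<otimes> ((a \<ominus> \<one>) \<otimes> (a \<ominus> \<one>)) = a \<otimes> a \<oplus> \<one>"
    using A0 ca by (simp add: m_assoc)
  have cnz: "c \<noteq> \<zero>" unfolding c_def using f_nz emb_nz[of 5] by simp
  have anz: "a \<noteq> \<zero>" unfolding a_def using f_nz emb_nz[of 2] by simp
  have "(a \<oplus> \<one>) \<ominus> a \<otimes> (a \<ominus> \<one>) = (a \<ominus> \<one>) \<otimes> (a \<ominus> \<one>)"
  proof -
    have "c \<otimes> ((a \<oplus> \<one>) \<ominus> a \<otimes> (a \<ominus> \<one>)) = c \<otimes> ((a \<ominus> \<one>) \<otimes> (a \<ominus> \<one>))" using A' B by simp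
    then show ?thesis using m_lcancel[OF cnz, of "(a \<oplus> \<one>) \<ominus> a \<otimes> (a \<ominus> \<one>)" "(a \<ominus> \<one>) \<otimes> (a \<ominus> \<one>)"] ca by simp
  qed
  then have "(a \<oplus> \<one>) \<ominus> a \<otimes> (a \<ominus> \<one>) \<ominus> (a \<ominus> \<one>) \<otimes> (a \<ominus> \<one>) = \<zero>" using diff0 ca by simp
  moreover have "(a \<oplus> \<one>) \<ominus> a \<otimes> (a \<ominus> \<one>) \<ominus> (a \<ominus> \<one>) \<otimes> (a \<ominus> \<one>) = (\<one> \<oplus> \<one>) \<otimes> a \<otimes> ((\<one> \<oplus> \<one>) \<ominus> a)"
    using ca by algebra
  ultimately have "(\<one> \<oplus> \<one>) \<otimes> a \<otimes> ((\<one> \<oplus> \<one>) \<ominus> a) = \<zero>" by simp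
  then have "(\<one> \<oplus> \<one>) \<ominus> a = \<zero>" using integral_iff two_nz anz ca by simp
  then show ?thesis using diff0 two_emb ca unfolding a_def by simp
qed

lemma f_nat: "f (emb (of_nat n)) = emb (of_nat n) \<and> f (emb (of_nat (Suc n))) = emb (of_nat (Suc n))"
proof (induction n)
  case 0 then show ?case using f0 f1 emb_one by simp
next
  case (Suc n)
  show ?case
  proof (cases "n = 0")
    case True
    have "(of_nat (Suc (Suc 0)) :: rat) = 2" by simp
    then show ?thesis using f1 f_two emb_one True by (simp only: of_nat_1 One_nat_def[symmetric])
  next
    case False
    define t where "t = emb (of_nat (Suc n))"
    have tc: "t \<in> carrier R" unfolding t_def by simp
    have ft: "f t = t" using Suc unfolding t_def by blast
    have t1: "t \<noteq> \<one>" unfolding t_def using emb_ne[of "of_nat (Suc n)" 1] emb_one False by auto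
    have tm: "t \<ominus> \<one> = emb (of_nat n)" unfolding t_def using emb_diff[of "of_nat (Suc n)" 1] emb_one by simp
    have ftm: "f (t \<ominus> \<one>) = t \<ominus> \<one>" unfolding tm using Suc by blast
    have tp: "t \<oplus> \<one> = emb (of_nat (Suc (Suc n)))" unfolding t_def by (rule emb_of_nat_Suc[symmetric])
    have E: "f (t \<oplus> \<one>) \<otimes> (f t \<ominus> f \<one>) = (f t \<oplus> f \<one>) \<otimes> f (t \<ominus> \<one>)"
      using f_E[of t \<one>] tc t1 by simp
    then have "f (t \<oplus> \<one>) \<otimes> (t \<ominus> \<one>) = (t \<oplus> \<one>) \<otimes> (t \<ominus> \<one>)"
      unfolding ft f1 ftm .
    then have "f (t \<oplus> \<one>) = t \<oplus> \<one>" using m_rcancel[of "t \<ominus> \<one>"] nz_diff[of t \<one>] tc t1 by simp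
    then have "f (emb (of_nat (Suc (Suc n)))) = emb (of_nat (Suc (Suc n)))" unfolding tp .
    moreover have "f (emb (of_nat (Suc n))) = emb (of_nat (Suc n))" using Suc by blast
    ultimately show ?thesis by blast
  qed
qed

lemma f_int: "f (emb (of_int k)) = emb (of_int k)"
proof (cases "k \<ge> 0")
  case True
  define m where "m = nat k"
  have m: "k = int m" using True unfolding m_def by simp
  then show ?thesis using f_nat[of m] by simp
next
  case False
  define m where "m = nat (- k)"
  have m: "k = - int m" using False unfolding m_def by simp
  have "f (emb (of_int k)) = f (\<ominus> emb (of_nat m))" using emb_minus m by simp
  also have "\<dots> = \<ominus> f (emb (of_nat m))" using f_neg by simp
  also have "\<dots> = \<ominus> emb (of_nat m)" using f_nat[of m] by simp
  also have "\<dots> = emb (of_int k)" using emb_minus m by simp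
  finally show ?thesis .
qed

lemma f_emb: "f (emb q) = emb q"
proof -
  obtain a b :: int where q: "q = of_int a / of_int b" "b \<noteq> 0" using rat_frac[of q] by metis
  have bnz: "emb (of_int b) \<noteq> \<zero>" using emb_nz q by simp
  have "emb q = emb (of_int a) \<otimes> inv (emb (of_int b))" using emb_divide q by simp
  also have "f \<dots> = f (emb (of_int a)) \<otimes> f (inv (emb (of_int b)))"
    using f_mult inv_ok[OF _ bnz] by simp
  also have "\<dots> = emb (of_int a) \<otimes> inv (emb (of_int b))" using f_inv[OF _ bnz] f_int by simp
  finally show ?thesis using emb_divide q by simp
qed
end

context sdfield begin

definition e2 :: int where "e2 = (if p = 2 then 3 else 1)"

lemma e2_pos: "e2 \<ge> 1" unfolding e2_def by simp

definition Gs :: "'a \<Rightarrow> bool" where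
  "Gs y \<longleftrightarrow> y \<in> carrier R \<and> (y \<ominus> \<one> = \<zero> \<or> V (y \<ominus> \<one>) \<ge> e2)"

lemma G1: assumes "Gs y" shows "y \<noteq> \<zero>" "V y = 0"
proof -
  have yc: "y \<in> carrier R" using assms Gs_def by simp
  have "y \<noteq> \<zero> \<and> V y = 0"
  proof (cases "y \<ominus> \<one> = \<zero>")
    case True then have "y = \<one>" using diff0 yc by simp
    then show ?thesis using V_one by simp
  next
    case False
    then have v: "V (y \<ominus> \<one>) > V \<one>" using assms e2_pos V_one unfolding Gs_def by simp
    have y: "y = \<one> \<oplus> (y \<ominus> \<one>)" using yc by algebra
    show ?thesis using V_add_strict[of \<one> "y \<ominus> \<one>"] v False yc y V_one by simp
  qed
  then show "y \<noteq> \<zero>" "V y = 0" by simp_all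
qed

lemma G_one: "Gs \<one>" unfolding Gs_def by (simp add: r_neg minus_eq)

lemma unit_dec:
  assumes zc: "z \<in> carrier R" and "z \<noteq> \<zero>" "V z = 0"
  shows "\<exists>q w. q \<noteq> 0 \<and> vq p q = 0 \<and> Gs w \<and> z = emb q \<otimes> w"
proof -
  obtain q where q: "z \<ominus> emb q = \<zero> \<or> V (z \<ominus> emb q) \<ge> e2" using approx[OF zc assms(2)] by blast
  show ?thesis
  proof (cases "z \<ominus> emb q = \<zero>")
    case True
    then have zq: "z = emb q" using diff0 zc by simp
    then have q0: "q \<noteq> 0" using assms by auto
    then have "vq p q = 0" using V_emb zq assms by simp
    moreover have "z = emb q \<otimes> \<one>" using zq by simp
    ultimately show ?thesis using q0 G_one by blast
  next
    case False
    define d where "d = z \<ominus> emb q"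
    have dc: "d \<in> carrier R" unfolding d_def using zc by simp
    have vd: "V d \<ge> e2" using q False unfolding d_def by simp
    have eq: "emb q = z \<oplus> \<ominus> d" unfolding d_def using zc emb_closed[of q] by algebra
    have dnz: "d \<noteq> \<zero>" using False unfolding d_def .
    have mdc: "\<ominus> d \<in> carrier R" "\<ominus> d \<noteq> \<zero>" using dc neg_nz[OF dc dnz] by simp_all
    have "V z < V (\<ominus> d)" using vd V_neg[OF dc] e2_pos assms by simp
    from V_add_strict[OF zc mdc(1) assms(2) mdc(2) this]
    have qnz: "emb q \<noteq> \<zero>" and vq0: "V (emb q) = 0" unfolding eq[symmetric] using assms by simp_all
    have q0: "q \<noteq> 0" using qnz by auto
    then have vq: "vq p q = 0" using V_emb vq0 by simp
    note iq = inv_ok[OF emb_closed qnz]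
    define w where "w = z \<otimes> inv (emb q)"
    have wc: "w \<in> carrier R" unfolding w_def using iq zc by simp
    have "d \<otimes> inv (emb q) = z \<otimes> inv (emb q) \<ominus> emb q \<otimes> inv (emb q)" unfolding d_def using zc iq(1) emb_closed[of q] by algebra
    then have wm: "w \<ominus> \<one> = d \<otimes> inv (emb q)" unfolding w_def using iq by simp
    have "V (w \<ominus> \<one>) = V d" using wm V_div[OF dc emb_closed dnz qnz] vq0 by simp
    then have "Gs w" unfolding Gs_def using wc vd by simp
    moreover have "z = emb q \<otimes> w" using div_mult_eq[of z "emb q" w] zc iq qnz wc unfolding w_def by (simp add: m_comm)
    ultimately show ?thesis using q0 vq by blast
  qed
qed


lemma G_sqrt: assumes "Gs y" shows "\<exists>z\<in>carrier R. z \<otimes> z = y \<and> z \<noteq> \<zero> \<and> V z = 0"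
proof -
  have yc: "y \<in> carrier R" using assms Gs_def by simp
  have "y \<ominus> \<one> = \<zero> \<or> V (y \<ominus> \<one>) \<ge> (if p = 2 then 3 else 1)" using assms unfolding Gs_def e2_def by simp
  then obtain z where z: "z \<in> carrier R" "z \<otimes> z = y" using sqrt_ex[OF yc] by blast
  have znz: "z \<noteq> \<zero>"
  proof
    assume "z = \<zero>" then have "y = \<zero>" using z by simp
    then show False using G1[OF assms] by simp
  qed
  have "V y = V z + V z" using V_mult[OF z(1) z(1) znz znz] z by simp
  then have "V z = 0" using G1[OF assms] by simp
  then show ?thesis using z znz by blast
qed

definition pw :: "int \<Rightarrow> rat" where
  "pw m = (if m \<ge> 0 then of_nat p ^ nat m else inverse (of_nat p ^ nat (- m)))"

lemma pow_nz: "(of_nat p :: rat) ^ n \<noteq> 0" using prime_gt_0_nat[OF prime_p] by simp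

lemma vq_pow: "vq p (of_nat p ^ n) = int n"
proof (induction n)
  case 0 then show ?case using vq_one by simp
next
  case (Suc n)
  have "vq p (of_nat p ^ Suc n) = vq p (of_nat p) + vq p (of_nat p ^ n)"
    using vq_mult[of "of_nat p" "of_nat p ^ n"] pow_nz prime_gt_0_nat[OF prime_p] by simp
  then show ?case using Suc vq_p by simp
qed

lemma pw_nz: "pw m \<noteq> 0"
  by (cases "m \<ge> 0") (simp_all add: pw_def pow_nz del: of_nat_power power_eq_0_iff)

lemma vq_pw: "vq p (pw m) = m"
proof (cases "m \<ge> 0")
  case True then show ?thesis unfolding pw_def using vq_pow by simp
next
  case False
  have "vq p (inverse ((of_nat p :: rat) ^ nat (- m))) = - int (nat (- m))"
    using vq_inverse[OF pow_nz] vq_pow by simp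
  then show ?thesis unfolding pw_def using False by simp
qed

end

context sdmap begin

lemma phi_G: "Gs y \<Longrightarrow> (2::int) ^ k dvd V (f y)"
proof (induction k arbitrary: y)
  case 0 then show ?case by simp
next
  case (Suc k)
  have yc: "y \<in> carrier R" using Suc.prems Gs_def by simp
  obtain z where z: "z \<in> carrier R" "z \<otimes> z = y" "z \<noteq> \<zero>" "V z = 0" using G_sqrt[OF Suc.prems] by blast
  obtain q w where qw: "q \<noteq> 0" "vq p q = 0" "Gs w" "z = emb q \<otimes> w" using unit_dec[OF z(1,3,4)] by blast
  have wc: "w \<in> carrier R" and wnz: "w \<noteq> \<zero>" using qw(3) G1(1)[OF qw(3)] unfolding Gs_def by simp_all
  have fz: "f z = emb q \<otimes> f w" using qw f_mult f_emb wc by simp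
  have fznz: "f z \<noteq> \<zero>" using f_nz z by simp
  have "V (f z) = V (emb q) + V (f w)" using fz V_mult[of "emb q" "f w"] emb_nz qw(1) f_nz wc wnz by simp
  then have vfz: "V (f z) = V (f w)" using V_emb qw by simp
  have "f y = f z \<otimes> f z" using z f_mult by auto
  then have "V (f y) = 2 * V (f w)" using V_mult[of "f z" "f z"] fznz z vfz by simp
  moreover have "(2::int) ^ k dvd V (f w)" using Suc.IH qw(3) by simp
  ultimately show ?case by simp
qed

lemma pow2_dvd_zero: assumes "\<forall>k. (2::int) ^ k dvd n" shows "n = 0"
proof (rule ccontr)
  assume n: "n \<noteq> 0"
  have "(2::int) ^ nat \<bar>n\<bar> dvd n" using assms by simp
  then have "\<bar>(2::int) ^ nat \<bar>n\<bar>\<bar> \<le> \<bar>n\<bar>" by (rule dvd_imp_le_int[OF n])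
  moreover have "nat \<bar>n\<bar> < 2 ^ nat \<bar>n\<bar>" by (rule less_exp)
  then have "int (nat \<bar>n\<bar>) < int (2 ^ nat \<bar>n\<bar>)" by (simp only: of_nat_less_iff)
  then have "\<bar>n\<bar> < (2::int) ^ nat \<bar>n\<bar>" by simp
  ultimately show False by simp
qed

lemma phi_G0: assumes "Gs y" shows "V (f y) = 0"
proof -
  have "\<forall>k. (2::int) ^ k dvd V (f y)" using phi_G[OF assms] by simp
  then show ?thesis by (rule pow2_dvd_zero)
qed

lemma phi_unit: assumes "z \<in> carrier R" "z \<noteq> \<zero>" "V z = 0" shows "V (f z) = 0"
proof -
  obtain q w where qw: "q \<noteq> 0" "vq p q = 0" "Gs w" "z = emb q \<otimes> w" using unit_dec[OF assms] by blast
  have wc: "w \<in> carrier R" and wnz: "w \<noteq> \<zero>" using qw(3) G1(1)[OF qw(3)] unfolding Gs_def by simp_all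
  have fz: "f z = emb q \<otimes> f w" using qw f_mult f_emb wc by simp
  have "V (f z) = V (emb q) + V (f w)" using fz V_mult[of "emb q" "f w"] emb_nz qw(1) f_nz wc wnz by simp
  then show ?thesis using V_emb qw phi_G0 by simp
qed

lemma V_f: assumes xc: "x \<in> carrier R" and xnz: "x \<noteq> \<zero>" shows "V (f x) = V x"
proof -
  define r where "r = emb (pw (V x))"
  have rc: "r \<in> carrier R" and rnz: "r \<noteq> \<zero>" and vr: "V r = V x"
    unfolding r_def using emb_nz pw_nz V_emb vq_pw by auto
  note ir = inv_ok[OF rc rnz]
  define z where "z = x \<otimes> inv r"
  have zc: "z \<in> carrier R" unfolding z_def using xc ir by simp
  have znz: "z \<noteq> \<zero>" unfolding z_def using mult_nz xc ir xnz by simp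
  have vz: "V z = 0" unfolding z_def using V_div xc rc xnz rnz vr by simp
  have x: "x = z \<otimes> r" using div_mult_eq[of x r z] xc rc zc rnz unfolding z_def by simp
  have "f x = f (z \<otimes> r)" using x by simp
  also have "\<dots> = f z \<otimes> f r" using f_mult zc rc by simp
  also have "f r = r" unfolding r_def by (rule f_emb)
  finally have "f x = f z \<otimes> r" .
  then have "V (f x) = V (f z) + V r" using V_mult f_nz zc znz rc rnz by simp
  then show ?thesis using phi_unit zc znz vz vr by simp
qed

lemma cont: assumes sc: "s \<in> carrier R" and snz: "s \<noteq> \<zero>" and vs: "V s > vq p 2"
  shows "f (\<one> \<oplus> s) \<ominus> \<one> \<noteq> \<zero>" "V (f (\<one> \<oplus> s) \<ominus> \<one>) = V s"
proof -
  define two where "two = \<one> \<oplus> \<one>"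
  have tc: "two \<in> carrier R" and tnz: "two \<noteq> \<zero>" unfolding two_def using two_nz by simp_all
  have vt: "V two = vq p 2" unfolding two_def two_emb using V_emb by simp
  note is1 = inv_ok[OF sc snz]
  define u where "u = two \<otimes> inv s"
  have uc: "u \<in> carrier R" unfolding u_def using tc is1 by simp
  have unz: "u \<noteq> \<zero>" unfolding u_def using mult_nz tc is1 tnz by simp
  have vu: "V u = vq p 2 - V s" unfolding u_def using V_div tc sc tnz snz vt by simp
  have us: "u \<otimes> s = two" unfolding u_def using div_mult_eq[of two s "two \<otimes> inv s"] tc sc snz is1 by simp
  define t where "t = \<one> \<oplus> u"
  have tc': "t \<in> carrier R" unfolding t_def using uc by simp
  have "V u < V \<one>" using vu vs V_one by simp
  then have "u \<oplus> \<one> \<noteq> \<zero>" "V (u \<oplus> \<one>) = V u" using V_add_strict[of u \<one>] uc unz by auto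
  moreover have "t = u \<oplus> \<one>" unfolding t_def using uc by algebra
  ultimately have tnz': "t \<noteq> \<zero>" and vtt: "V t = V u" by simp_all
  have tm: "t \<ominus> \<one> = u" unfolding t_def using uc by algebra
  have t1: "t \<noteq> \<one>" using tm unz diff0 tc' by auto
  have tp: "t \<oplus> \<one> = u \<otimes> (\<one> \<oplus> s)"
  proof -
    have "u \<otimes> (\<one> \<oplus> s) = u \<oplus> u \<otimes> s" using uc sc by algebra
    also have "\<dots> = u \<oplus> two" using us by simp
    also have "\<dots> = t \<oplus> \<one>" unfolding t_def two_def using uc by algebra
    finally show ?thesis by simp
  qed
  define g where "g = f (\<one> \<oplus> s)"
  have gc: "g \<in> carrier R" unfolding g_def using sc by simp
  have ftc: "f t \<in> carrier R" using tc' by simp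
  have "f (t \<oplus> \<one>) \<otimes> (f t \<ominus> f \<one>) = (f t \<oplus> f \<one>) \<otimes> f (t \<ominus> \<one>)" using f_E[of t \<one>] tc' t1 by simp
  then have "f u \<otimes> g \<otimes> (f t \<ominus> \<one>) = (f t \<oplus> \<one>) \<otimes> f u" unfolding tp tm f1 g_def using f_mult uc sc by simp
  then have "f u \<otimes> (g \<otimes> (f t \<ominus> \<one>)) = f u \<otimes> (f t \<oplus> \<one>)" using uc gc ftc m_assoc m_comm[of "f t \<oplus> \<one>" "f u"] by simp
  then have E: "g \<otimes> (f t \<ominus> \<one>) = f t \<oplus> \<one>" using m_lcancel[of "f u"] f_nz[OF uc unz] uc gc ftc by simp
  have "(g \<ominus> \<one>) \<otimes> (f t \<ominus> \<one>) = g \<otimes> (f t \<ominus> \<one>) \<ominus> (f t \<ominus> \<one>)" using gc ftc by algebra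
  also have "\<dots> = (f t \<oplus> \<one>) \<ominus> (f t \<ominus> \<one>)" using E by simp
  also have "\<dots> = two" unfolding two_def using ftc by algebra
  finally have P: "(g \<ominus> \<one>) \<otimes> (f t \<ominus> \<one>) = two" .
  have vft: "V (f t) = V u" using V_f tc' tnz' vtt by simp
  have ftnz: "f t \<noteq> \<zero>" using f_nz tc' tnz' by simp
  have m1: "V (\<ominus> \<one>) = 0" using V_neg V_one by simp
  have "V (f t) < V (\<ominus> \<one>)" using vft vu vs m1 by simp
  then have ft1: "f t \<oplus> \<ominus> \<one> \<noteq> \<zero>" "V (f t \<oplus> \<ominus> \<one>) = V (f t)"
    using V_add_strict[of "f t" "\<ominus> \<one>"] ftc ftnz neg_nz by auto
  have ft1': "f t \<ominus> \<one> \<noteq> \<zero>" "V (f t \<ominus> \<one>) = V u" using ft1 vft by (simp_all add: minus_eq)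
  show g1: "f (\<one> \<oplus> s) \<ominus> \<one> \<noteq> \<zero>"
  proof
    assume "f (\<one> \<oplus> s) \<ominus> \<one> = \<zero>"
    then have "two = \<zero> \<otimes> (f t \<ominus> \<one>)" using P unfolding g_def by simp
    also have "\<dots> = \<zero>" using ftc by simp
    finally show False using tnz by simp
  qed
  have "V two = V (g \<ominus> \<one>) + V (f t \<ominus> \<one>)" using P V_mult[of "g \<ominus> \<one>" "f t \<ominus> \<one>"] gc ftc g1 ft1' g_def by simp
  then show "V (f (\<one> \<oplus> s) \<ominus> \<one>) = V s" using vt ft1' vu unfolding g_def by simp
qed

theorem f_id: assumes xc: "x \<in> carrier R" shows "f x = x"
proof (cases "x = \<zero>")
  case True then show ?thesis using f0 by simp
next
  case xnz: False
  show ?thesis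
  proof (rule ccontr)
    assume ne: "f x \<noteq> x"
    define d where "d = f x \<ominus> x"
    have dc: "d \<in> carrier R" unfolding d_def using xc by simp
    have dnz: "d \<noteq> \<zero>" unfolding d_def using ne diff0 xc by simp
    define M where "M = max (vq p 2 + 1) (V d - V x + 1)"
    obtain q where q: "x \<ominus> emb q = \<zero> \<or> V (x \<ominus> emb q) \<ge> V x + M" using approx[OF xc xnz] by blast
    show False
    proof (cases "x \<ominus> emb q = \<zero>")
      case True then have "x = emb q" using diff0 xc by simp
      then show False using ne f_emb by simp
    next
      case False
      define de where "de = x \<ominus> emb q"
      have dec: "de \<in> carrier R" unfolding de_def using xc by simp
      have vde: "V de \<ge> V x + M" using q False unfolding de_def by simp
      define r where "r = emb q"
      have rc: "r \<in> carrier R" unfolding r_def by simp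
      have req: "r = x \<oplus> \<ominus> de" unfolding r_def de_def using xc emb_closed[of q] by algebra
      have v2nn: "vq p 2 \<ge> 0" using vq_two by simp
      have M1: "M \<ge> vq p 2 + 1" "M \<ge> V d - V x + 1" unfolding M_def by simp_all
      have "V x < V (\<ominus> de)" using vde V_neg[OF dec] M1 v2nn by linarith
      then have rnz: "r \<noteq> \<zero>" and vr: "V r = V x"
        using V_add_strict[of x "\<ominus> de"] req xc dec neg_nz False de_def xnz by auto
      note ir = inv_ok[OF rc rnz]
      define s where "s = de \<otimes> inv r"
      have sc: "s \<in> carrier R" unfolding s_def using dec ir by simp
      have snz: "s \<noteq> \<zero>" unfolding s_def using mult_nz dec ir False de_def by simp
      have vs: "V s = V de - V x" unfolding s_def using V_div dec rc False de_def rnz vr by simp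
      then have vs2: "V s > vq p 2" "V s \<ge> V d - V x + 1" using vde M1 by linarith+
      have x1: "x = r \<otimes> (\<one> \<oplus> s)"
      proof -
        have "r \<otimes> (\<one> \<oplus> s) = r \<oplus> de \<otimes> (r \<otimes> inv r)" unfolding s_def using rc dec ir by algebra
        also have "\<dots> = r \<oplus> de" using ir dec by simp
        also have "\<dots> = x" unfolding r_def de_def using xc emb_closed[of q] by algebra
        finally show ?thesis by simp
      qed
      define g where "g = f (\<one> \<oplus> s)"
      have gc: "g \<in> carrier R" unfolding g_def using sc by simp
      have fx: "f x = r \<otimes> g" unfolding g_def using x1 f_mult[of r "\<one> \<oplus> s"] rc sc f_emb r_def by simp
      have "d = r \<otimes> g \<ominus> r \<otimes> (\<one> \<oplus> s)" unfolding d_def using fx x1 by simp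
      also have "\<dots> = r \<otimes> ((g \<ominus> \<one>) \<oplus> \<ominus> s)" using rc gc sc by algebra
      finally have deq: "d = r \<otimes> ((g \<ominus> \<one>) \<oplus> \<ominus> s)" .
      have c1: "g \<ominus> \<one> \<noteq> \<zero>" "V (g \<ominus> \<one>) = V s" using cont[OF sc snz vs2(1)] unfolding g_def by simp_all
      have "(g \<ominus> \<one>) \<oplus> \<ominus> s = \<zero> \<or> V ((g \<ominus> \<one>) \<oplus> \<ominus> s) \<ge> V s"
        using V_add_ge[of "g \<ominus> \<one>" "\<ominus> s" "V s"] c1 V_neg[OF sc] gc sc by simp
      moreover have "(g \<ominus> \<one>) \<oplus> \<ominus> s \<noteq> \<zero>" using deq dnz rc by auto
      ultimately have "V ((g \<ominus> \<one>) \<oplus> \<ominus> s) \<ge> V s" by simp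
      moreover have "V d = V r + V ((g \<ominus> \<one>) \<oplus> \<ominus> s)"
        using deq V_mult[of r "(g \<ominus> \<one>) \<oplus> \<ominus> s"] rc gc sc rnz \<open>(g \<ominus> \<one>) \<oplus> \<ominus> s \<noteq> \<zero>\<close> by simp
      ultimately show False using vr vs2 by simp
    qed
  qed
qed

end

context pctx begin

definition EV :: "(nat \<Rightarrow> rat) \<Rightarrow> int \<Rightarrow> bool" where
  "EV X K \<longleftrightarrow> (\<exists>N. \<forall>n\<ge>N. X n \<noteq> 0 \<and> vq p (X n) = K)"

definition Vp :: "(nat \<Rightarrow> rat) set \<Rightarrow> int" where
  "Vp x = (THE K. EV (padic_rep x) K)"

definition embp :: "rat \<Rightarrow> (nat \<Rightarrow> rat) set" where
  "embp q = cls (\<lambda>n. q)"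

lemma EV_unique: assumes "EV X K" "EV X L" shows "K = L"
proof -
  obtain N where N: "\<forall>n\<ge>N. X n \<noteq> 0 \<and> vq p (X n) = K" using assms(1) EV_def by blast
  obtain M where M: "\<forall>n\<ge>M. X n \<noteq> 0 \<and> vq p (X n) = L" using assms(2) EV_def by blast
  have "vq p (X (max N M)) = K" using N by simp
  moreover have "vq p (X (max N M)) = L" using M by simp
  ultimately show ?thesis by simp
qed

lemma EV_eqv: assumes "EV X K" "eqv X Y" shows "EV Y K"
proof -
  obtain N where N: "\<forall>n\<ge>N. X n \<noteq> 0 \<and> vq p (X n) = K" using assms(1) EV_def by blast
  obtain M where M: "\<forall>n\<ge>M. vge p (X n - Y n) (K + 1)" using assms(2) eqv_def by blast
  have "\<forall>n\<ge>max N M. Y n \<noteq> 0 \<and> vq p (Y n) = K"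
  proof (intro allI impI)
    fix n assume n: "n \<ge> max N M"
    then have x: "X n \<noteq> 0" "vq p (X n) = K" using N by auto
    have d: "vge p (Y n - X n) (K + 1)" using M n vge_minus[of "X n - Y n"] by (simp add: minus_diff_eq)
    show "Y n \<noteq> 0 \<and> vq p (Y n) = K"
    proof (cases "Y n - X n = 0")
      case True then show ?thesis using x by simp
    next
      case False
      then have "vq p (X n) < vq p (Y n - X n)" using d x unfolding vge_def by simp
      from vq_add_strict[OF x(1) False this] x show ?thesis by simp
    qed
  qed
  then show ?thesis unfolding EV_def by blast
qed

lemma EV_nonnull: assumes "EV X K" shows "\<not> eqv X (\<lambda>n. 0)"
proof
  assume "eqv X (\<lambda>n. 0)"
  then obtain M where M: "\<forall>n\<ge>M. vge p (X n - 0) (K + 1)" unfolding eqv_def by blast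
  obtain N where N: "\<forall>n\<ge>N. X n \<noteq> 0 \<and> vq p (X n) = K" using assms EV_def by blast
  have "vge p (X (max N M)) (K + 1)" "X (max N M) \<noteq> 0" "vq p (X (max N M)) = K" using M N by auto
  then show False unfolding vge_def by simp
qed

lemma EV_exists: "cau X \<Longrightarrow> \<not> eqv X (\<lambda>n. 0) \<Longrightarrow> \<exists>K. EV X K"
  using nonnull_const unfolding EV_def by blast

lemma Vp_cls: assumes "cau X" "\<not> eqv X (\<lambda>n. 0)" shows "EV X (Vp (cls X))"
proof -
  obtain K where K: "EV X K" using EV_exists assms by blast
  have "EV (padic_rep (cls X)) K" using EV_eqv[OF K rep_cls(2)[OF assms(1)]] .
  then have "Vp (cls X) = K" unfolding Vp_def using EV_unique by blast
  then show ?thesis using K by simp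
qed

lemma Vp_eq: assumes "cau X" "EV X K" shows "Vp (cls X) = K"
  using Vp_cls[OF assms(1) EV_nonnull[OF assms(2)]] EV_unique assms(2) by blast

lemma nz_cls: assumes "cau X" "cls X \<noteq> \<zero>\<^bsub>Qp p\<^esub>" shows "\<not> eqv X (\<lambda>n. 0)"
  using assms cls_eqI by auto

lemma a_inv_Qp: assumes "cau Y" shows "\<ominus>\<^bsub>Qp p\<^esub> (cls Y) = cls (\<lambda>n. - Y n)"
proof -
  interpret F: field "Qp p" by (rule Qp_field)
  have "cls (\<lambda>n. - Y n) \<oplus>\<^bsub>Qp p\<^esub> cls Y = \<zero>\<^bsub>Qp p\<^esub>" using assms by (simp add: add_cls cau_minus)
  then show ?thesis using F.minus_equality assms cls_in cau_minus by simp
qed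

lemma a_minus_Qp: assumes "x \<in> padic p" "y \<in> padic p" shows "x \<ominus>\<^bsub>Qp p\<^esub> y = padic_sub p x y"
proof -
  obtain X Y where XY: "cau X" "cau Y" "x = cls X" "y = cls Y" using assms by (auto elim!: padicE)
  then show ?thesis using a_inv_Qp[OF XY(2)] by (simp add: a_minus_def add_cls sub_cls cau_minus)
qed

lemma minus_cls: "cau X \<Longrightarrow> cau Y \<Longrightarrow> cls X \<ominus>\<^bsub>Qp p\<^esub> cls Y = cls (\<lambda>n. X n - Y n)"
  using a_minus_Qp sub_cls cls_in by simp

lemma inv_Qp: assumes "y \<in> padic p" "y \<noteq> padic_zero p" shows "inv\<^bsub>Qp p\<^esub> y = padic_inverse p y"
proof -
  interpret F: field "Qp p" by (rule Qp_field)
  obtain Y where Y: "cau Y" "y = cls Y" using assms by (auto elim!: padicE)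
  have nY: "\<not> eqv Y (\<lambda>n. 0)" using assms Y cls_zero_iff by simp
  have "y \<otimes>\<^bsub>Qp p\<^esub> padic_inverse p y = \<one>\<^bsub>Qp p\<^esub>" using inv_exists[OF Y(1) nY] inverse_cls[OF Y(1) nY] Y by simp
  moreover have "padic_inverse p y \<in> padic p" using inverse_cls[OF Y(1) nY] Y cls_in cau_inverse[OF Y(1) nY] by simp
  ultimately show ?thesis using F.comm_inv_char assms by simp
qed

lemma divide_Qp: assumes "x \<in> padic p" "y \<in> padic p" "y \<noteq> padic_zero p"
  shows "padic_divide p x y = x \<otimes>\<^bsub>Qp p\<^esub> inv\<^bsub>Qp p\<^esub> y"
  using inv_Qp[OF assms(2,3)] unfolding padic_divide_def by simp

end

context pctx begin

lemma embp_closed: "embp q \<in> carrier (Qp p)" unfolding embp_def by (simp add: cls_in cau_const)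
lemma embp_add: "embp (a + b) = embp a \<oplus>\<^bsub>Qp p\<^esub> embp b" unfolding embp_def by (simp add: add_cls cau_const)
lemma embp_mult: "embp (a * b) = embp a \<otimes>\<^bsub>Qp p\<^esub> embp b" unfolding embp_def by (simp add: mult_cls cau_const)
lemma embp_one: "embp 1 = \<one>\<^bsub>Qp p\<^esub>" unfolding embp_def by simp

lemma Vp_mult:
  assumes "x \<in> carrier (Qp p)" "y \<in> carrier (Qp p)" "x \<noteq> \<zero>\<^bsub>Qp p\<^esub>" "y \<noteq> \<zero>\<^bsub>Qp p\<^esub>"
  shows "Vp (x \<otimes>\<^bsub>Qp p\<^esub> y) = Vp x + Vp y"
proof -
  obtain X Y where XY: "cau X" "cau Y" "x = cls X" "y = cls Y" using assms by (auto elim!: padicE)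
  have nX: "\<not> eqv X (\<lambda>n. 0)" and nY: "\<not> eqv Y (\<lambda>n. 0)" using nz_cls XY assms by auto
  obtain N where N: "\<forall>n\<ge>N. X n \<noteq> 0 \<and> vq p (X n) = Vp x" using Vp_cls[OF XY(1) nX] XY EV_def by auto
  obtain M where M: "\<forall>n\<ge>M. Y n \<noteq> 0 \<and> vq p (Y n) = Vp y" using Vp_cls[OF XY(2) nY] XY EV_def by auto
  have "\<forall>n\<ge>max N M. X n * Y n \<noteq> 0 \<and> vq p (X n * Y n) = Vp x + Vp y" using N M vq_mult by simp
  then have "EV (\<lambda>n. X n * Y n) (Vp x + Vp y)" unfolding EV_def by blast
  then show ?thesis using Vp_eq[OF cau_mult[OF XY(1,2)]] XY mult_cls by simp
qed

lemma Vp_add: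
  assumes "x \<in> carrier (Qp p)" "y \<in> carrier (Qp p)" "x \<noteq> \<zero>\<^bsub>Qp p\<^esub>" "y \<noteq> \<zero>\<^bsub>Qp p\<^esub>"
    "x \<oplus>\<^bsub>Qp p\<^esub> y \<noteq> \<zero>\<^bsub>Qp p\<^esub>"
  shows "Vp (x \<oplus>\<^bsub>Qp p\<^esub> y) \<ge> min (Vp x) (Vp y)"
proof -
  obtain X Y where XY: "cau X" "cau Y" "x = cls X" "y = cls Y" using assms by (auto elim!: padicE)
  have nX: "\<not> eqv X (\<lambda>n. 0)" and nY: "\<not> eqv Y (\<lambda>n. 0)" using nz_cls XY assms by auto
  have sxy: "x \<oplus>\<^bsub>Qp p\<^esub> y = cls (\<lambda>n. X n + Y n)" using XY add_cls by simp
  have cS: "cau (\<lambda>n. X n + Y n)" using cau_add XY by simp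
  have nS: "\<not> eqv (\<lambda>n. X n + Y n) (\<lambda>n. 0)" using nz_cls[OF cS] sxy assms by simp
  obtain N where N: "\<forall>n\<ge>N. X n \<noteq> 0 \<and> vq p (X n) = Vp x" using Vp_cls[OF XY(1) nX] XY EV_def by auto
  obtain M where M: "\<forall>n\<ge>M. Y n \<noteq> 0 \<and> vq p (Y n) = Vp y" using Vp_cls[OF XY(2) nY] XY EV_def by auto
  obtain L where L: "\<forall>n\<ge>L. X n + Y n \<noteq> 0 \<and> vq p (X n + Y n) = Vp (x \<oplus>\<^bsub>Qp p\<^esub> y)"
    using Vp_cls[OF cS nS] sxy EV_def by auto
  define n where "n = max N (max M L)"
  have "X n \<noteq> 0" "Y n \<noteq> 0" "X n + Y n \<noteq> 0" "vq p (X n) = Vp x" "vq p (Y n) = Vp y"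
    "vq p (X n + Y n) = Vp (x \<oplus>\<^bsub>Qp p\<^esub> y)" using N M L unfolding n_def by auto
  then show ?thesis using vq_add[of "X n" "Y n"] by simp
qed

lemma Vp_emb: "q \<noteq> 0 \<Longrightarrow> Vp (embp q) = vq p q"
  unfolding embp_def by (rule Vp_eq[OF cau_const]) (auto simp: EV_def)

lemma Vp_approx:
  assumes "x \<in> carrier (Qp p)" "x \<noteq> \<zero>\<^bsub>Qp p\<^esub>"
  shows "\<exists>q. x \<ominus>\<^bsub>Qp p\<^esub> embp q = \<zero>\<^bsub>Qp p\<^esub> \<or> Vp (x \<ominus>\<^bsub>Qp p\<^esub> embp q) \<ge> k"
proof -
  obtain X where X: "cau X" "x = cls X" using assms by (auto elim!: padicE)
  obtain N where N: "\<forall>m\<ge>N. \<forall>n\<ge>N. vge p (X m - X n) k" using X(1) cau_def by blast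
  define Z where "Z = (\<lambda>n. X n - X N)"
  have cZ: "cau Z" unfolding Z_def using cau_diff X(1) cau_const by simp
  have d: "x \<ominus>\<^bsub>Qp p\<^esub> embp (X N) = cls Z" unfolding Z_def embp_def using minus_cls X cau_const by simp
  have "Vp (cls Z) \<ge> k" if nz: "cls Z \<noteq> \<zero>\<^bsub>Qp p\<^esub>"
  proof -
    have nZ: "\<not> eqv Z (\<lambda>n. 0)" using nz_cls[OF cZ nz] .
    obtain M where M: "\<forall>n\<ge>M. Z n \<noteq> 0 \<and> vq p (Z n) = Vp (cls Z)" using Vp_cls[OF cZ nZ] EV_def by auto
    have "Z (max N M) \<noteq> 0" "vq p (Z (max N M)) = Vp (cls Z)" using M by auto
    moreover have "vge p (Z (max N M)) k" using N unfolding Z_def by simp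
    ultimately show ?thesis unfolding vge_def by simp
  qed
  then show ?thesis using d by (intro exI[of _ "X N"]) auto
qed

(* rational Hensel lemma *)
definition dd :: int where "dd = (if p = 2 then 2 else 1)"
definition ee :: int where "ee = (if p = 2 then 3 else 1)"

lemma vge_half: "vge p x m \<Longrightarrow> vge p (x / 2) (m - vq p 2)"
  by (cases "x = 0") (simp_all add: vge_def vq_divide)

lemma hensel_step:
  assumes z1: "vge p (z - 1) dd" and za: "vge p (z * z - a) m" and m: "m \<ge> ee"
  shows "vge p ((z + (a - z * z) / 2) - 1) dd" "vge p ((z + (a - z * z) / 2) * (z + (a - z * z) / 2) - a) (m + 1)"
proof -
  have h: "vge p ((a - z * z) / 2) (m - vq p 2)" using vge_half[of "a - z * z" m] za vge_minus[of "z * z - a"]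
    by (simp add: minus_diff_eq)
  have h2: "vge p ((a - z * z) / 2) dd" using vge_mono[OF h] m vq_two unfolding dd_def ee_def by auto
  have eq: "(z + (a - z * z) / 2) - 1 = (z - 1) + (a - z * z) / 2" by simp
  show "vge p ((z + (a - z * z) / 2) - 1) dd" unfolding eq by (rule vge_add[OF z1 h2])
  have e: "(z + (a - z * z) / 2) * (z + (a - z * z) / 2) - a = (z * z - a) * (1 - z) + ((a - z * z) / 2) * ((a - z * z) / 2)"
    by (simp add: field_simps)
  have t1: "vge p ((z * z - a) * (1 - z)) (m + dd)" using vge_mult[OF za] z1 vge_minus[of "z - 1"] by (simp add: minus_diff_eq)
  have t2: "vge p (((a - z * z) / 2) * ((a - z * z) / 2)) ((m - vq p 2) + (m - vq p 2))" using vge_mult[OF h h] .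
  have "m + 1 \<le> m + dd" unfolding dd_def by simp
  moreover have "m + 1 \<le> (m - vq p 2) + (m - vq p 2)" using m vq_two unfolding ee_def by auto
  ultimately have "vge p ((z * z - a) * (1 - z)) (m + 1)" "vge p (((a - z * z) / 2) * ((a - z * z) / 2)) (m + 1)"
    using vge_mono t1 t2 by blast+
  then have "vge p ((z * z - a) * (1 - z) + ((a - z * z) / 2) * ((a - z * z) / 2)) (m + 1)" by (rule vge_add)
  then show "vge p ((z + (a - z * z) / 2) * (z + (a - z * z) / 2) - a) (m + 1)" using e by simp
qed

lemma hensel_rat:
  assumes "vge p (a - 1) ee"
  shows "\<exists>z. vge p (z - 1) dd \<and> vge p (z * z - a) (ee + int n)"
proof (induction n)
  case 0
  have "vge p (1 * 1 - a) ee" using assms vge_minus[of "a - 1"] by (simp add: minus_diff_eq)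
  then show ?case by (intro exI[of _ 1]) simp
next
  case (Suc n)
  then obtain z where z: "vge p (z - 1) dd" "vge p (z * z - a) (ee + int n)" by blast
  have e: "ee + int (Suc n) = (ee + int n) + 1" by simp
  show ?case unfolding e using hensel_step[OF z] by (intro exI[of _ "z + (a - z * z) / 2"]) simp
qed

lemma dd_gt: "vq p 2 < dd" unfolding dd_def using vq_two by simp

lemma sum_val:
  assumes "vge p (u - 1) dd" "vge p (w - 1) dd"
  shows "u + w \<noteq> 0" "vq p (u + w) = vq p 2"
proof -
  define t where "t = (u - 1) + (w - 1)"
  have s: "vge p t dd" unfolding t_def using vge_add assms by blast
  have e: "u + w = 2 + t" unfolding t_def by simp
  have "2 + t \<noteq> 0 \<and> vq p (2 + t) = vq p 2"
  proof (cases "t = 0")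
    case True then show ?thesis by simp
  next
    case False
    then have "dd \<le> vq p t" using s unfolding vge_def by simp
    then have v: "vq p 2 < vq p t" using dd_gt by linarith
    have two: "(2::rat) \<noteq> 0" by simp
    show ?thesis using vq_add_strict[OF two False v] by simp
  qed
  then show "u + w \<noteq> 0" "vq p (u + w) = vq p 2" unfolding e by simp_all
qed

lemma diff_from_sq:
  assumes "vge p (u - 1) dd" "vge p (w - 1) dd" "vge p (u * u - w * w) (k + vq p 2)"
  shows "vge p (u - w) k"
proof -
  note s = sum_val[OF assms(1,2)]
  have e: "u - w = (u * u - w * w) / (u + w)" using s(1) by (simp add: field_simps)
  show ?thesis
  proof (cases "u * u - w * w = 0")
    case True then show ?thesis using e by simp
  next
    case False
    then have "vq p ((u * u - w * w) / (u + w)) = vq p (u * u - w * w) - vq p 2" using vq_divide s by simp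
    then show ?thesis using e assms(3) False unfolding vge_def by simp
  qed
qed


lemma sqrt_Qp:
  assumes xc: "x \<in> carrier (Qp p)" and h: "x \<ominus>\<^bsub>Qp p\<^esub> \<one>\<^bsub>Qp p\<^esub> = \<zero>\<^bsub>Qp p\<^esub> \<or> Vp (x \<ominus>\<^bsub>Qp p\<^esub> \<one>\<^bsub>Qp p\<^esub>) \<ge> ee"
  shows "\<exists>z\<in>carrier (Qp p). z \<otimes>\<^bsub>Qp p\<^esub> z = x"
proof -
  obtain X where X: "cau X" "x = cls X" using xc by (auto elim!: padicE)
  define Y where "Y = (\<lambda>n. X n - 1)"
  have cY: "cau Y" unfolding Y_def using cau_diff X(1) cau_const by simp
  have xm: "x \<ominus>\<^bsub>Qp p\<^esub> \<one>\<^bsub>Qp p\<^esub> = cls Y" unfolding Y_def using minus_cls X cau_const by simp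
  have "\<exists>N0. \<forall>n\<ge>N0. vge p (X n - 1) ee"
  proof (cases "cls Y = \<zero>\<^bsub>Qp p\<^esub>")
    case True
    then have "eqv Y (\<lambda>n. 0)" using cls_eq_iff[OF cY] by simp
    then obtain N where "\<forall>n\<ge>N. vge p (Y n - 0) ee" unfolding eqv_def by blast
    then show ?thesis unfolding Y_def by auto
  next
    case False
    then have nY: "\<not> eqv Y (\<lambda>n. 0)" using nz_cls[OF cY] by simp
    obtain N where N: "\<forall>n\<ge>N. Y n \<noteq> 0 \<and> vq p (Y n) = Vp (cls Y)" using Vp_cls[OF cY nY] EV_def by auto
    have "Vp (cls Y) \<ge> ee" using h xm False by simp
    then have "\<forall>n\<ge>N. vge p (X n - 1) ee" using N unfolding Y_def vge_def by simp
    then show ?thesis by blast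
  qed
  then obtain N0 where N0: "\<forall>n\<ge>N0. vge p (X n - 1) ee" by blast
  define Z where "Z = (\<lambda>n. if n \<ge> N0 then (SOME z. vge p (z - 1) dd \<and> vge p (z * z - X n) (ee + int n)) else 1)"
  have Zp: "vge p (Z n - 1) dd \<and> (n \<ge> N0 \<longrightarrow> vge p (Z n * Z n - X n) (ee + int n))" for n
  proof (cases "n \<ge> N0")
    case True
    have "\<exists>z. vge p (z - 1) dd \<and> vge p (z * z - X n) (ee + int n)" using hensel_rat N0 True by blast
    from someI_ex[OF this] show ?thesis unfolding Z_def using True by simp
  next
    case False then show ?thesis unfolding Z_def by simp
  qed
  have ee1: "ee \<ge> 1" unfolding ee_def by simp
  have v2: "vq p 2 \<ge> 0" using vq_two by simp
  have cZ: "cau Z" unfolding cau_def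
  proof
    fix k
    obtain N1 where N1: "\<forall>m\<ge>N1. \<forall>n\<ge>N1. vge p (X m - X n) (k + vq p 2)" using X(1) cau_def by blast
    define N where "N = max N0 (max N1 (nat (k + vq p 2)))"
    have "\<forall>m\<ge>N. \<forall>n\<ge>N. vge p (Z m - Z n) k"
    proof (intro allI impI)
      fix m n assume mn: "m \<ge> N" "n \<ge> N"
      have a1: "vge p (Z m * Z m - X m) (k + vq p 2)"
        using Zp[of m] mn ee1 vge_mono[of "Z m * Z m - X m" "ee + int m" "k + vq p 2"] unfolding N_def by auto
      have a2: "vge p (Z n * Z n - X n) (k + vq p 2)"
        using Zp[of n] mn ee1 vge_mono[of "Z n * Z n - X n" "ee + int n" "k + vq p 2"] unfolding N_def by auto
      have a3: "vge p (X m - X n) (k + vq p 2)" using N1 mn unfolding N_def by auto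
      have "Z m * Z m - Z n * Z n = ((Z m * Z m - X m) + (X m - X n)) - (Z n * Z n - X n)" by simp
      then have "vge p (Z m * Z m - Z n * Z n) (k + vq p 2)" using a1 a2 a3 vge_add vge_diff by presburger
      then show "vge p (Z m - Z n) k" using diff_from_sq Zp by blast
    qed
    then show "\<exists>N. \<forall>m\<ge>N. \<forall>n\<ge>N. vge p (Z m - Z n) k" by blast
  qed
  have eZ: "eqv (\<lambda>n. Z n * Z n) X" unfolding eqv_def
  proof
    fix k
    have "\<forall>n\<ge>max N0 (nat k). vge p (Z n * Z n - X n) k"
    proof (intro allI impI)
      fix n assume n: "n \<ge> max N0 (nat k)"
      then have "vge p (Z n * Z n - X n) (ee + int n)" using Zp[of n] by simp
      moreover have "k \<le> ee + int n" using n ee1 by linarith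
      ultimately show "vge p (Z n * Z n - X n) k" using vge_mono by blast
    qed
    then show "\<exists>N. \<forall>n\<ge>N. vge p (Z n * Z n - X n) k" by blast
  qed
  have "cls Z \<otimes>\<^bsub>Qp p\<^esub> cls Z = x" using mult_cls[OF cZ cZ] cls_eqI[OF eZ] X by simp
  moreover have "cls Z \<in> carrier (Qp p)" using cls_in[OF cZ] by simp
  ultimately show ?thesis by blast
qed
end

context pctx begin

lemma Qp_sdfield: "sdfield (Qp p) p Vp embp"
proof (intro sdfield.intro Qp_field pctx_axioms sdfield_axioms.intro)
  fix q show "embp q \<in> carrier (Qp p)" by (rule embp_closed)
next
  fix a b show "embp (a + b) = embp a \<oplus>\<^bsub>Qp p\<^esub> embp b" by (rule embp_add)
next
  fix a b show "embp (a * b) = embp a \<otimes>\<^bsub>Qp p\<^esub> embp b" by (rule embp_mult)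
next
  show "embp 1 = \<one>\<^bsub>Qp p\<^esub>" by (rule embp_one)
next
  fix x y assume "x \<in> carrier (Qp p)" "y \<in> carrier (Qp p)" "x \<noteq> \<zero>\<^bsub>Qp p\<^esub>" "y \<noteq> \<zero>\<^bsub>Qp p\<^esub>"
  then show "Vp (x \<otimes>\<^bsub>Qp p\<^esub> y) = Vp x + Vp y" by (rule Vp_mult)
next
  fix x y assume "x \<in> carrier (Qp p)" "y \<in> carrier (Qp p)" "x \<noteq> \<zero>\<^bsub>Qp p\<^esub>" "y \<noteq> \<zero>\<^bsub>Qp p\<^esub>"
    "x \<oplus>\<^bsub>Qp p\<^esub> y \<noteq> \<zero>\<^bsub>Qp p\<^esub>"
  then show "min (Vp x) (Vp y) \<le> Vp (x \<oplus>\<^bsub>Qp p\<^esub> y)" by (rule Vp_add)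
next
  fix q :: rat assume "q \<noteq> 0" then show "Vp (embp q) = vq p q" by (rule Vp_emb)
next
  fix x k assume "x \<in> carrier (Qp p)" "x \<noteq> \<zero>\<^bsub>Qp p\<^esub>"
  then show "\<exists>q. x \<ominus>\<^bsub>Qp p\<^esub> embp q = \<zero>\<^bsub>Qp p\<^esub> \<or> k \<le> Vp (x \<ominus>\<^bsub>Qp p\<^esub> embp q)" by (rule Vp_approx)
next
  fix x assume "x \<in> carrier (Qp p)"
    "x \<ominus>\<^bsub>Qp p\<^esub> \<one>\<^bsub>Qp p\<^esub> = \<zero>\<^bsub>Qp p\<^esub> \<or> (if p = 2 then 3 else 1) \<le> Vp (x \<ominus>\<^bsub>Qp p\<^esub> \<one>\<^bsub>Qp p\<^esub>)"
  then show "\<exists>z\<in>carrier (Qp p). z \<otimes>\<^bsub>Qp p\<^esub> z = x" using sqrt_Qp unfolding ee_def by blast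
qed

end

theorem theoremA1:
  fixes p :: nat
  assumes "prime p"
  shows "padic_SD p = {f. \<forall>x\<in>padic p. f x = x}"
proof -
  interpret pctx p using assms by (rule pctx.intro)
  interpret S: sdfield "Qp p" p Vp embp by (rule Qp_sdfield)
  have sub: "padic_sub p x y = x \<ominus>\<^bsub>Qp p\<^esub> y" if "x \<in> padic p" "y \<in> padic p" for x y
    using a_minus_Qp that by simp
  have zero: "padic_zero p = \<zero>\<^bsub>Qp p\<^esub>" by (simp add: zero_cls)
  have div: "padic_divide p (padic_add p x y) (padic_sub p x y) = (x \<oplus>\<^bsub>Qp p\<^esub> y) \<otimes>\<^bsub>Qp p\<^esub> inv\<^bsub>Qp p\<^esub> (x \<ominus>\<^bsub>Qp p\<^esub> y)"
    if "x \<in> padic p" "y \<in> padic p" "x \<noteq> y" for x y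
  proof -
    have "x \<ominus>\<^bsub>Qp p\<^esub> y \<noteq> \<zero>\<^bsub>Qp p\<^esub>" using S.nz_diff that by simp
    moreover have "padic_add p x y \<in> padic p" "x \<ominus>\<^bsub>Qp p\<^esub> y \<in> padic p"
      using S.a_closed[of x y] S.minus_closed[of x y] that by simp_all
    ultimately show ?thesis using divide_Qp[of "padic_add p x y" "padic_sub p x y"] sub[OF that(1,2)] that zero by simp
  qed
  show ?thesis
  proof (intro equalityI subsetI)
    fix f assume "f \<in> padic_SD p"
    then have sd: "padic_SD_map p f" unfolding padic_SD_def by simp
    have fc: "\<And>x. x \<in> padic p \<Longrightarrow> f x \<in> padic p" using sd unfolding padic_SD_map_def by blast
    have "sdmap (Qp p) p Vp embp f"
    proof (intro sdmap.intro Qp_sdfield sdmap_axioms.intro)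
      fix x assume "x \<in> carrier (Qp p)" then show "f x \<in> carrier (Qp p)" using fc by simp
    next
      fix x y assume "x \<in> carrier (Qp p)" "y \<in> carrier (Qp p)" "x \<noteq> y"
      then show "f x \<noteq> f y" using sd unfolding padic_SD_map_def by simp
    next
      fix x y assume xy: "x \<in> carrier (Qp p)" "y \<in> carrier (Qp p)" "x \<noteq> y"
      then have fxy: "f x \<noteq> f y" using sd unfolding padic_SD_map_def by simp
      have "f (padic_divide p (padic_add p x y) (padic_sub p x y)) =
          padic_divide p (padic_add p (f x) (f y)) (padic_sub p (f x) (f y))"
        using sd xy unfolding padic_SD_map_def by simp
      then show "f ((x \<oplus>\<^bsub>Qp p\<^esub> y) \<otimes>\<^bsub>Qp p\<^esub> inv\<^bsub>Qp p\<^esub> (x \<ominus>\<^bsub>Qp p\<^esub> y)) =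
          (f x \<oplus>\<^bsub>Qp p\<^esub> f y) \<otimes>\<^bsub>Qp p\<^esub> inv\<^bsub>Qp p\<^esub> (f x \<ominus>\<^bsub>Qp p\<^esub> f y)"
        using div[of x y] div[of "f x" "f y"] xy fxy fc by simp
    qed
    then show "f \<in> {f. \<forall>x\<in>padic p. f x = x}" using sdmap.f_id by fastforce
  next
    fix f assume "f \<in> {f. \<forall>x\<in>padic p. f x = x}"
    then have fi: "\<And>x. x \<in> padic p \<Longrightarrow> f x = x" by simp
    have img: "f ` padic p = padic p" using fi by (auto simp: image_iff)
    have cl: "padic_divide p (padic_add p x y) (padic_sub p x y) \<in> padic p"
      if "x \<in> padic p" "y \<in> padic p" "x \<noteq> y" for x y
    proof -
      have "x \<ominus>\<^bsub>Qp p\<^esub> y \<noteq> \<zero>\<^bsub>Qp p\<^esub>" using S.nz_diff that by simp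
      moreover have "x \<ominus>\<^bsub>Qp p\<^esub> y \<in> carrier (Qp p)" using S.minus_closed[of x y] that by simp
      ultimately have "inv\<^bsub>Qp p\<^esub> (x \<ominus>\<^bsub>Qp p\<^esub> y) \<in> carrier (Qp p)" using S.inv_ok(1) by blast
      moreover have "padic_add p x y \<in> carrier (Qp p)" using S.a_closed[of x y] that by simp
      ultimately have "padic_add p x y \<otimes>\<^bsub>Qp p\<^esub> inv\<^bsub>Qp p\<^esub> (x \<ominus>\<^bsub>Qp p\<^esub> y) \<in> carrier (Qp p)"
        using S.m_closed by blast
      then show ?thesis using div[OF that] that by simp
    qed
    have "padic_SD_map p f" unfolding padic_SD_map_def
      using fi cl by simp
    then show "f \<in> padic_SD p" unfolding padic_SD_def using img by simp
  qed
qed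


end
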